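(* Let $\mathcal{H}_A,\mathcal{H}_B$ be complex Hilbert spaces of finite dimensions $d_A,d_B$, and put $d=\min\{d_A,d_B\}$, $D=\max\{d_A,d_B\}$. Assume $D\le d^3$ and let $h$ be an integer with $1<h\le d^2$. Then for every separable state $\rho$ on $\mathcal{H}_A\otimes\mathcal{H}_B$ that is in Filter Normal Form, $$\mathcal{M}_{h,p=1}(\rho)\le S_h(\alpha,\beta,\ldots,\beta),$$ where $S_h$ is the $h$-th elementary symmetric polynomial in $d^2$ variables, the argument consists of $\alpha$ once and $\beta$ repeated $d^2-1$ times, and $$\alpha=\frac{1}{\sqrt{Dd}},\qquad \beta=\sqrt{\frac{D-1}{D(d^2-1)}\cdot\frac{d-1}{d(d^2-1)}}.$$
   Context: Let $\{A_i\}_{i=1}^{d_A^2}$ be an orthonormal basis of the real vector space of $d_A\times d_A$ Hermitian matrices with respect to the Hilbert–Schmidt inner product $\langle X,Y\rangle=\mathrm{tr}(XY)$, and $\{B_j\}_{j=1}^{d_B^2}$ likewise for $d_B\times d_B$ Hermitian matrices. For a state (density matrix) $\rho$ on $\mathcal{H}_A\otimes\mathcal{H}_B$, its correlation matrix is the real $d_A^2\times d_B^2$ matrix $\mathcal{C}_{ij}=\mathrm{tr}(\rho\, A_i\otimes B_j)$; let $\sigma_1\ge\cdots\ge\sigma_{d^2}\ge0$ be its singular values (these do not depend on the choice of the orthonormal bases). For $1\le h\le d^2$ and $p\in[1,\infty)$ the Correlation Minor Norm is $$\mathcal{M}_{h,p}(\rho)=\Big(\sum_{R\subseteq\{1,\ldots,d^2\},\,|R|=h}\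 \prod_{k\in R}\sigma_k^p\Big)^{1/p},$$ equivalently the Schatten $p$-norm of the $h$-th compound matrix of $\mathcal{C}$. In particular $\mathcal{M}_{h,1}=S_h(\sigma_1,\ldots,\sigma_{d^2})$, where $S_h(x_1,\ldots,x_n)=\sum_{|R|=h}\prod_{k\in R}x_k$. A state is separable if it is a convex combination of product states $\rho_A\otimes\rho_B$. A state $\rho$ is in Filter Normal Form (FNF) if $\mathrm{tr}(\rho\,(A\otimes\mathbb{1}))=0$ for every traceless Hermitian $A$ on $\mathcal{H}_A$ and $\mathrm{tr}(\rho\,(\mathbb{1}\otimes B))=0$ for every traceless Hermitian $B$ on $\mathcal{H}_B$. *)

theory Defs
  imports "Jordan_Normal_Form.Matrix" Complex_Main
begin

(* Complex n x n matrices are Jordan_Normal_Form matrices of type complex mat;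
   the Hilbert spaces H_A, H_B are C^{dA}, C^{dB}, and H_A \<otimes> H_B is C^{dA*dB}
   with the standard (lexicographic) index identification (i,k) \<mapsto> i*dB + k. *)

definition mtrace :: "'a::comm_ring_1 mat \<Rightarrow> 'a" where
  "mtrace M = (\<Sum>i<dim_row M. M $$ (i,i))"

definition kron :: "'a::times mat \<Rightarrow> 'a mat \<Rightarrow> 'a mat" where
  "kron M N = mat (dim_row M * dim_row N) (dim_col M * dim_col N)
     (\<lambda>(i,j). M $$ (i div dim_row N, j div dim_col N) * N $$ (i mod dim_row N, j mod dim_col N))"

definition hermitian_mat :: "nat \<Rightarrow> complex mat \<Rightarrow> bool" where
  "hermitian_mat n M \<longleftrightarrow> M \<in> carrier_mat n n \<and>
     (\<forall>i<n. \<forall>j<n. M $$ (i,j) = cnj (M $$ (j,i)))"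

definition psd_mat :: "nat \<Rightarrow> complex mat \<Rightarrow> bool" where
  "psd_mat n M \<longleftrightarrow> hermitian_mat n M \<and>
     (\<forall>v. Re (\<Sum>i<n. \<Sum>j<n. cnj (v i) * M $$ (i,j) * v j) \<ge> 0)"

definition state :: "nat \<Rightarrow> complex mat \<Rightarrow> bool" where
  "state n \<rho> \<longleftrightarrow> psd_mat n \<rho> \<and> mtrace \<rho> = 1"

definition separable :: "nat \<Rightarrow> nat \<Rightarrow> complex mat \<Rightarrow> bool" where
  "separable dA dB \<rho> \<longleftrightarrow> (\<exists>m (p :: nat \<Rightarrow> real) \<rho>A \<rho>B.
     (\<forall>k<m. p k \<ge> 0 \<and> state dA (\<rho>A k) \<and> state dB (\<rho>B k)) \<and>
     (\<Sum>k<m. p k) = 1 \<and>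
     \<rho> = mat (dA*dB) (dA*dB) (\<lambda>ij. \<Sum>k<m. complex_of_real (p k) * kron (\<rho>A k) (\<rho>B k) $$ ij))"

definition FNF :: "nat \<Rightarrow> nat \<Rightarrow> complex mat \<Rightarrow> bool" where
  "FNF dA dB \<rho> \<longleftrightarrow>
     (\<forall>A. hermitian_mat dA A \<and> mtrace A = 0 \<longrightarrow> mtrace (\<rho> * kron A (1\<^sub>m dB)) = 0) \<and>
     (\<forall>B. hermitian_mat dB B \<and> mtrace B = 0 \<longrightarrow> mtrace (\<rho> * kron (1\<^sub>m dA) B) = 0)"

(* orthonormal basis (w.r.t. <X,Y> = tr(XY)) of the real vector space of n x n Hermitian
   matrices, given as a list of n^2 matrices; spanning follows from the dimension count *)
definition herm_onb :: "nat \<Rightarrow> complex mat list \<Rightarrow> bool" where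
  "herm_onb n As \<longleftrightarrow> length As = n^2 \<and> (\<forall>i<n^2. hermitian_mat n (As ! i)) \<and>
     (\<forall>i<n^2. \<forall>j<n^2. mtrace (As ! i * As ! j) = (if i = j then 1 else 0))"

(* correlation matrix C_ij = tr(\<rho> (A_i \<otimes> B_j)), real since all factors are Hermitian *)
definition corr_mat :: "complex mat \<Rightarrow> complex mat list \<Rightarrow> complex mat list \<Rightarrow> real mat" where
  "corr_mat \<rho> As Bs = mat (length As) (length Bs)
     (\<lambda>(i,j). Re (mtrace (\<rho> * kron (As ! i) (Bs ! j))))"

definition real_orthogonal :: "nat \<Rightarrow> real mat \<Rightarrow> bool" where
  "real_orthogonal n U \<longleftrightarrow> U \<in> carrier_mat n n \<and> transpose_mat U * U = 1\<^sub>m n"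

definition singular_values :: "real mat \<Rightarrow> real list \<Rightarrow> bool" where
  "singular_values C \<sigma> \<longleftrightarrow>
     length \<sigma> = min (dim_row C) (dim_col C) \<and> (\<forall>k<length \<sigma>. \<sigma> ! k \<ge> 0) \<and>
     sorted_wrt (\<ge>) \<sigma> \<and>
     (\<exists>U V. real_orthogonal (dim_row C) U \<and> real_orthogonal (dim_col C) V \<and>
        C = U * mat (dim_row C) (dim_col C) (\<lambda>(i,j). if i = j then \<sigma> ! i else 0) * transpose_mat V)"

definition esym :: "nat \<Rightarrow> real list \<Rightarrow> real" where
  "esym h xs = (\<Sum>R\<in>{R. R \<subseteq> {..<length xs} \<and> card R = h}. \<Prod>k\<in>R. xs ! k)"

definition CMN :: "nat \<Rightarrow> real \<Rightarrow> real list \<Rightarrow> real" where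
  "CMN h p \<sigma> = (\<Sum>R\<in>{R. R \<subseteq> {..<length \<sigma>} \<and> card R = h}. \<Prod>k\<in>R. (\<sigma> ! k) powr p) powr (1/p)"

end

theory Submission
  imports Defs "Jordan_Normal_Form.Determinant"
begin

definition esS :: "nat \<Rightarrow> nat set \<Rightarrow> (nat \<Rightarrow> real) \<Rightarrow> real" where
  "esS h I f = (\<Sum>R\<in>{R. R \<subseteq> I \<and> card R = h}. \<Prod>k\<in>R. f k)"

lemma esS_cong: "(\<And>i. i \<in> I \<Longrightarrow> f i = g i) \<Longrightarrow> esS h I f = esS h I g"
  unfolding esS_def by (intro sum.cong refl prod.cong) auto

lemma esS_const: "finite I \<Longrightarrow> esS h I (\<lambda>_. c) = real (card I choose h) * c ^ h"
  unfolding esS_def by (simp add: n_subsets)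

lemma esS_0: "finite I \<Longrightarrow> esS 0 I f = 1"
proof -
  assume "finite I"
  hence "{R. R \<subseteq> I \<and> card R = 0} = {{}}" using finite_subset by fastforce
  thus ?thesis unfolding esS_def by simp
qed

lemma esS_insert:
  assumes "finite I" "a \<notin> I"
  shows "esS (Suc h) (insert a I) f = f a * esS h I f + esS (Suc h) I f"
proof -
  have split: "{R. R \<subseteq> insert a I \<and> card R = Suc h} =
     insert a ` {R. R \<subseteq> I \<and> card R = h} \<union> {R. R \<subseteq> I \<and> card R = Suc h}"
  proof (rule Set.set_eqI, rule iffI)
    fix R assume "R \<in> {R. R \<subseteq> insert a I \<and> card R = Suc h}"
    hence R: "R \<subseteq> insert a I" "card R = Suc h" by auto
    show "R \<in> insert a ` {R. R \<subseteq> I \<and> card R = h} \<union> {R. R \<subseteq> I \<and> card R = Suc h}"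
    proof (cases "a \<in> R")
      case True
      have "R = insert a (R - {a})" using True by auto
      moreover have "R - {a} \<subseteq> I" using R by auto
      moreover have "card (R - {a}) = h" using R True
        by (metis One_nat_def card.infinite card_Diff_singleton diff_Suc_1 nat.distinct(1))
      ultimately show ?thesis by blast
    next
      case False thus ?thesis using R by auto
    qed
  next
    fix R assume "R \<in> insert a ` {R. R \<subseteq> I \<and> card R = h} \<union> {R. R \<subseteq> I \<and> card R = Suc h}"
    thus "R \<in> {R. R \<subseteq> insert a I \<and> card R = Suc h}"
    proof
      assume "R \<in> insert a ` {R. R \<subseteq> I \<and> card R = h}"
      then obtain R' where "R = insert a R'" "R' \<subseteq> I" "card R' = h" by auto
      moreover have "finite R'" using \<open>R' \<subseteq> I\<close> assms(1) finite_subset by blast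
      moreover have "a \<notin> R'" using \<open>R' \<subseteq> I\<close> assms(2) by auto
      ultimately show ?thesis by auto
    qed auto
  qed
  have fin1: "finite {R. R \<subseteq> I \<and> card R = h}" for h using assms(1) by auto
  have disj: "insert a ` {R. R \<subseteq> I \<and> card R = h} \<inter> {R. R \<subseteq> I \<and> card R = Suc h} = {}"
    using assms(2) by auto
  have inj: "inj_on (insert a) {R. R \<subseteq> I \<and> card R = h}"
    using assms(2) unfolding inj_on_def by (metis insert_ident mem_Collect_eq subset_iff)
  have "esS (Suc h) (insert a I) f = (\<Sum>R\<in>insert a ` {R. R \<subseteq> I \<and> card R = h}. \<Prod>k\<in>R. f k)
      + (\<Sum>R\<in>{R. R \<subseteq> I \<and> card R = Suc h}. \<Prod>k\<in>R. f k)"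
    unfolding esS_def split by (rule sum.union_disjoint) (use fin1 disj in auto)
  also have "(\<Sum>R\<in>insert a ` {R. R \<subseteq> I \<and> card R = h}. \<Prod>k\<in>R. f k)
      = (\<Sum>R\<in>{R. R \<subseteq> I \<and> card R = h}. \<Prod>k\<in>insert a R. f k)"
    by (rule sum.reindex[OF inj, unfolded comp_def])
  also have "\<dots> = (\<Sum>R\<in>{R. R \<subseteq> I \<and> card R = h}. f a * (\<Prod>k\<in>R. f k))"
  proof (rule sum.cong[OF refl])
    fix R assume "R \<in> {R. R \<subseteq> I \<and> card R = h}"
    hence "finite R" "a \<notin> R" using assms finite_subset by auto
    thus "(\<Prod>k\<in>insert a R. f k) = f a * (\<Prod>k\<in>R. f k)" by simp
  qed
  finally show ?thesis unfolding esS_def by (simp add: sum_distrib_left)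
qed

definition phi :: "nat \<Rightarrow> nat \<Rightarrow> real \<Rightarrow> real \<Rightarrow> real" where
  "phi k h s x = x * real (k choose (h - 1)) * ((s - x) / k) ^ (h - 1) + real (k choose h) * ((s - x) / k) ^ h"

lemma binom_id: "real (k choose (Suc (Suc j))) * real (Suc (Suc j)) = real (k choose (Suc j)) * (real k - real (Suc j))"
proof (cases "Suc j \<le> k")
  case True
  have a: "(k - Suc j)*(k choose Suc j) = k*((k-1) choose Suc j)" by (rule binomial_absorb_comp)
  have b: "Suc (k-1) * ((k-1) choose Suc j) = (Suc (k-1) choose Suc (Suc j)) * Suc (Suc j)"
    by (rule Suc_times_binomial_eq)
  have "Suc (k-1) = k" using True by simp
  hence "(k choose Suc (Suc j)) * Suc (Suc j) = (k choose Suc j) * (k - Suc j)"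
    using a b by (metis mult.commute)
  hence "real ((k choose Suc (Suc j)) * Suc (Suc j)) = real ((k choose Suc j) * (k - Suc j))" by simp
  thus ?thesis using True by (simp only: of_nat_mult of_nat_diff)
next
  case False
  hence "k < Suc j" "k < Suc (Suc j)" by auto
  thus ?thesis by (simp add: binomial_eq_0)
qed

lemma phi_deriv:
  assumes "k \<ge> 1"
  shows "((\<lambda>x. phi k (Suc (Suc j)) s x) has_real_derivative
     real (k choose (Suc j)) * ((s-x)/k)^j * (real (Suc j)/k) * ((s-x)/k - x)) (at x)"
proof -
  define C1 where "C1 = real (k choose (Suc j))"
  define C2 where "C2 = real (k choose (Suc (Suc j)))"
  define m where "m = (\<lambda>x. (s - x) / real k)"
  have e: "(\<lambda>x. phi k (Suc (Suc j)) s x) = (\<lambda>x. C1 * (x * m x ^ (Suc j)) + C2 * m x ^ (Suc (Suc j)))"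
    unfolding phi_def C1_def C2_def m_def by (auto simp: algebra_simps)
  have dm: "(m has_real_derivative (-1/k)) (at x)"
    unfolding m_def using assms by (auto intro!: derivative_eq_intros)
  have p1: "((\<lambda>x. m x ^ (Suc j)) has_real_derivative real (Suc j) * ((-1/k) * m x ^ j)) (at x)"
    using DERIV_power[OF dm, of "Suc j"] by simp
  have p2: "((\<lambda>x. m x ^ (Suc (Suc j))) has_real_derivative real (Suc (Suc j)) * ((-1/k) * m x ^ (Suc j))) (at x)"
    using DERIV_power[OF dm, of "Suc (Suc j)"] by simp
  have q: "((\<lambda>x. x * m x ^ (Suc j)) has_real_derivative 1 * m x ^ (Suc j) + real (Suc j) * ((-1/k) * m x ^ j) * x) (at x)"
    by (rule DERIV_mult[OF DERIV_ident p1])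
  have d: "((\<lambda>x. C1 * (x * m x ^ (Suc j)) + C2 * m x ^ (Suc (Suc j))) has_real_derivative
     C1 * (1 * m x ^ (Suc j) + real (Suc j) * ((-1/k) * m x ^ j) * x) + C2 * (real (Suc (Suc j)) * ((-1/k) * m x ^ (Suc j)))) (at x)"
    by (rule DERIV_add[OF DERIV_cmult[OF q] DERIV_cmult[OF p2]])
  have bi: "C2 * real (Suc (Suc j)) = C1 * (real k - real (Suc j))"
    unfolding C1_def C2_def by (rule binom_id)
  have k0: "real k > 0" using assms by simp
  have "C1 * (1 * m x ^ (Suc j) + real (Suc j) * ((-1/k) * m x ^ j) * x) + C2 * (real (Suc (Suc j)) * ((-1/k) * m x ^ (Suc j)))
     = C1 * (1 * m x ^ (Suc j) + real (Suc j) * ((-1/k) * m x ^ j) * x) + (C2 * real (Suc (Suc j))) * ((-1/k) * m x ^ (Suc j))"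
    by (simp add: algebra_simps)
  also have "\<dots> = C1 * (m x)^j * (real (Suc j)/k) * (m x - x)"
    unfolding bi using k0 by (simp add: field_simps power_Suc)
  finally show ?thesis unfolding e C1_def[symmetric] m_def[symmetric] using d by (simp add: m_def)
qed


lemma phi_cont: "k \<ge> 1 \<Longrightarrow> continuous_on A (phi k h s)"
  unfolding phi_def by (intro continuous_intros) auto

lemma phi_inc2:
  assumes "k \<ge> 1" "0 \<le> x" "x \<le> y" "(real k + 1) * y \<le> s"
  shows "phi k (Suc (Suc j)) s x \<le> phi k (Suc (Suc j)) s y"
proof (rule DERIV_nonneg_imp_increasing_open[OF assms(3)])
  show "continuous_on {x..y} (phi k (Suc (Suc j)) s)" using phi_cont assms(1) by blast
  fix z assume z: "x < z" "z < y"
  have k0: "real k > 0" using assms by simp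
  have yz: "(real k + 1) * z \<le> (real k + 1) * y" using z by (intro mult_left_mono) auto
  have kz: "s - z \<ge> real k * z" using yz assms by (simp add: algebra_simps)
  hence zm: "(s - z) / k \<ge> z" using k0 by (simp add: le_divide_eq mult.commute)
  have mz: "(s - z) / k \<ge> 0" using zm z assms by linarith
  have "(s - z) / k - z \<ge> 0" using zm by simp
  hence "real (k choose (Suc j)) * ((s-z)/k)^j * (real (Suc j)/k) * ((s-z)/k - z) \<ge> 0"
    using mz k0 by (intro mult_nonneg_nonneg) auto
  thus "\<exists>y. (phi k (Suc (Suc j)) s has_real_derivative y) (at z) \<and> 0 \<le> y"
    using phi_deriv[OF assms(1), of j s z] by blast
qed

lemma phi_dec2:
  assumes "k \<ge> 1" "s \<le> (real k + 1) * x" "x \<le> y" "y \<le> s"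
  shows "phi k (Suc (Suc j)) s y \<le> phi k (Suc (Suc j)) s x"
proof (rule DERIV_nonpos_imp_decreasing_open[OF assms(3)])
  show "continuous_on {x..y} (phi k (Suc (Suc j)) s)" using phi_cont assms(1) by blast
  fix z assume z: "x < z" "z < y"
  have k0: "real k > 0" using assms by simp
  have mz: "(s - z) / k \<ge> 0" using k0 z assms by simp
  have yz: "(real k + 1) * x \<le> (real k + 1) * z" using z by (intro mult_left_mono) auto
  have kz: "s - z \<le> real k * z" using yz assms by (simp add: algebra_simps)
  hence zm: "(s - z) / k \<le> z" using k0 by (simp add: divide_le_eq mult.commute)
  have "(s - z) / k - z \<le> 0" using zm by simp
  hence "real (k choose (Suc j)) * ((s-z)/k)^j * (real (Suc j)/k) * ((s-z)/k - z) \<le> 0"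
    using mz k0 by (intro mult_nonneg_nonpos) auto
  thus "\<exists>y. (phi k (Suc (Suc j)) s has_real_derivative y) (at z) \<and> y \<le> 0"
    using phi_deriv[OF assms(1), of j s z] by blast
qed

lemma phi_one: "k \<ge> 1 \<Longrightarrow> phi k 1 s x = s"
  unfolding phi_def by simp

lemma phi_dec:
  assumes "k \<ge> 1" "h \<ge> 1" "s \<le> (real k + 1) * x" "x \<le> y" "y \<le> s"
  shows "phi k h s y \<le> phi k h s x"
proof -
  consider "h = 1" | j where "h = Suc (Suc j)" using assms(2) by (metis One_nat_def Suc_le_D not0_implies_Suc not_less_eq_eq)
  thus ?thesis
  proof cases
    case 1 thus ?thesis using phi_one assms by simp
  next
    case 2 thus ?thesis using phi_dec2 assms by simp
  qed
qed

lemma phi_at_mean: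
  assumes "k \<ge> 1" "h \<ge> 1"
  shows "phi k h s (s / (real k + 1)) = real (Suc k choose h) * (s / (real k + 1)) ^ h"
proof -
  obtain i where i: "h = Suc i" using assms(2) by (cases h) auto
  define t where "t = s / (real k + 1)"
  have k0: "real k > 0" using assms by simp
  have k1: "real k + 1 > 0" using k0 by simp
  have "s - t = t * k" unfolding t_def using k1 by (simp add: field_simps)
  hence mt: "(s - t) / k = t" using k0 by simp
  have "phi k h s t = t * real (k choose i) * t ^ i + real (k choose Suc i) * t ^ Suc i"
    unfolding phi_def mt i by simp
  also have "\<dots> = (real (k choose i) + real (k choose Suc i)) * t ^ Suc i"
    by (simp add: algebra_simps)
  also have "real (k choose i) + real (k choose Suc i) = real (Suc k choose h)"
    unfolding i by simp
  finally show ?thesis unfolding t_def i .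
qed

lemma phi_max:
  assumes "k \<ge> 1" "h \<ge> 1" "0 \<le> x" "x \<le> s"
  shows "phi k h s x \<le> real (Suc k choose h) * (s / (real k + 1)) ^ h"
proof -
  define t where "t = s / (real k + 1)"
  have k0: "real k > 0" using assms by simp
  have st: "(real k + 1) * t = s" unfolding t_def using k0 by simp
  have "phi k h s x \<le> phi k h s t"
  proof (cases "x \<le> t")
    case True
    consider "h = 1" | j where "h = Suc (Suc j)" using assms(2) by (metis One_nat_def Suc_le_D not0_implies_Suc not_less_eq_eq)
    thus ?thesis
    proof cases
      case 1 thus ?thesis using phi_one assms by simp
    next
      case 2 thus ?thesis using phi_inc2[OF assms(1) assms(3) True] st by simp
    qed
  next
    case False
    thus ?thesis using phi_dec[OF assms(1,2), of s t x] st assms by simp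
  qed
  thus ?thesis using phi_at_mean[OF assms(1,2)] t_def by simp
qed

lemma esS_empty: "esS h {} f = (if h = 0 then 1 else 0)"
proof (cases h)
  case 0 thus ?thesis by (simp add: esS_0)
next
  case (Suc h') thus ?thesis unfolding esS_def by auto
qed

lemma maclaurin:
  assumes "finite I" "\<forall>i\<in>I. f i \<ge> 0" "sum f I \<le> real (card I) * t"
  shows "esS h I f \<le> real (card I choose h) * t ^ h"
  using assms
proof (induction I arbitrary: h t rule: finite_induct)
  case empty
  thus ?case by (cases h) (auto simp: esS_empty)
next
  case (insert a I)
  show ?case
  proof (cases h)
    case 0 thus ?thesis using esS_0 insert by simp
  next
    case (Suc h')
    have fa: "f a \<ge> 0" using insert by simp
    have sI: "sum f I \<ge> 0" using insert by (intro sum_nonneg) auto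
    have cardi: "card (insert a I) = Suc (card I)" using insert by simp
    have rec: "esS h (insert a I) f = f a * esS h' I f + esS (Suc h') I f"
      unfolding Suc by (rule esS_insert[OF insert(1,2)])
    show ?thesis
    proof (cases "card I = 0")
      case True
      hence "I = {}" using insert(1) by simp
      hence "esS h (insert a I) f = f a * (if h' = 0 then 1 else 0)" using rec by (simp add: esS_empty)
      moreover have "f a \<le> t" using insert(5) \<open>I = {}\<close> by simp
      ultimately show ?thesis using Suc \<open>I = {}\<close> by (cases h') auto
    next
      case False
      define k where "k = card I"
      have k1: "k \<ge> 1" using False k_def by simp
      define s where "s = real (Suc k) * t"
      define t' where "t' = (s - f a) / k"
      have sumI: "sum f I \<le> real k * t'"
        unfolding t'_def s_def using insert(5) insert(1,2) k1 cardi by (simp add: k_def)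
      have IH1: "esS h' I f \<le> real (k choose h') * t' ^ h'"
        using insert(3)[of t' h'] insert(4) sumI k_def by simp
      have IH2: "esS (Suc h') I f \<le> real (k choose Suc h') * t' ^ Suc h'"
        using insert(3)[of t' "Suc h'"] insert(4) sumI k_def by simp
      have "esS h (insert a I) f \<le> f a * (real (k choose h') * t' ^ h') + real (k choose Suc h') * t' ^ Suc h'"
        unfolding rec using IH1 IH2 fa by (intro add_mono mult_left_mono) auto
      also have "\<dots> = phi k (Suc h') s (f a)"
        unfolding phi_def t'_def by (simp add: algebra_simps)
      also have "\<dots> \<le> real (Suc k choose Suc h') * (s / (real k + 1)) ^ Suc h'"
      proof (rule phi_max[OF k1])
        show "f a \<le> s" unfolding s_def using insert(5) insert(1,2) sI k_def cardi by simp
      qed (use fa in auto)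
      also have "s / (real k + 1) = t" unfolding s_def by (simp add: field_simps)
      finally show ?thesis using Suc cardi k_def by simp
    qed
  qed
qed

lemma esym_esS: "esym h xs = esS h {..<length xs} (\<lambda>i. xs ! i)"
  unfolding esym_def esS_def by simp

lemma final_ineq:
  fixes \<sigma> :: "real list"
  assumes n2: "length \<sigma> \<ge> 2" and h1: "h \<ge> 1"
    and nn: "\<forall>i<length \<sigma>. \<sigma> ! i \<ge> 0" and xa: "\<sigma> ! 0 \<ge> \<alpha>" and ab: "\<alpha> \<ge> \<beta>" and b0: "\<beta> \<ge> 0"
    and sm: "(\<Sum>i<length \<sigma>. \<sigma> ! i) \<le> \<alpha> + real (length \<sigma> - 1) * \<beta>"
  shows "esym h \<sigma> \<le> esym h (\<alpha> # replicate (length \<sigma> - 1) \<beta>)"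
proof -
  define n where "n = length \<sigma>"
  define k where "k = n - 1"
  define R where "R = {1..<n}"
  obtain h' where h': "h = Suc h'" using h1 by (cases h) auto
  have k1: "k \<ge> 1" using n2 unfolding k_def n_def by simp
  have ins: "{..<n} = insert 0 R" unfolding R_def using n2 n_def by auto
  have R0: "0 \<notin> R" "finite R" unfolding R_def by auto
  have cR: "card R = k" unfolding R_def k_def by simp
  define x where "x = \<sigma> ! 0"
  define S where "S = \<alpha> + real k * \<beta>"
  define t where "t = (S - x) / k"
  have sum_split: "(\<Sum>i<n. \<sigma> ! i) = x + sum (\<lambda>i. \<sigma> ! i) R"
    unfolding ins x_def using R0 by simp
  have sR: "sum (\<lambda>i. \<sigma> ! i) R \<ge> 0" using nn unfolding R_def n_def by (intro sum_nonneg) auto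
  have sRt: "sum (\<lambda>i. \<sigma> ! i) R \<le> real (card R) * t"
    unfolding cR t_def using sm sum_split k1 unfolding S_def k_def n_def by simp
  have "0 < length \<sigma>" using n2 by linarith
  hence x0: "x \<ge> 0" using nn unfolding x_def by blast
  have nnR: "\<forall>i\<in>R. \<sigma> ! i \<ge> 0" using nn unfolding R_def n_def by auto
  have "esym h \<sigma> = x * esS h' R (\<lambda>i. \<sigma> ! i) + esS h R (\<lambda>i. \<sigma> ! i)"
    unfolding esym_esS n_def[symmetric] ins h' x_def by (rule esS_insert[OF R0(2,1)])
  also have "\<dots> \<le> x * (real (k choose h') * t ^ h') + real (k choose h) * t ^ h"
    using maclaurin[OF R0(2) nnR sRt, of h'] maclaurin[OF R0(2) nnR sRt, of h] cR x0
    by (intro add_mono mult_left_mono) auto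
  also have "\<dots> = phi k h S x" unfolding phi_def t_def h' by (simp add: algebra_simps)
  also have "\<dots> \<le> phi k h S \<alpha>"
  proof (rule phi_dec[OF k1 h1])
    show "S \<le> (real k + 1) * \<alpha>" unfolding S_def using ab k1
      by (simp add: algebra_simps mult_left_mono)
    show "\<alpha> \<le> x" using xa x_def by simp
    show "x \<le> S" using sm sum_split sR unfolding S_def k_def n_def by simp
  qed
  also have "\<dots> = \<alpha> * (real (k choose h') * \<beta> ^ h') + real (k choose h) * \<beta> ^ h"
  proof -
    have "(S - \<alpha>) / k = \<beta>" unfolding S_def using k1 by simp
    thus ?thesis unfolding phi_def h' by (simp add: algebra_simps)
  qed
  also have "\<dots> = esym h (\<alpha> # replicate (length \<sigma> - 1) \<beta>)"
  proof -
    let ?L = "\<alpha> # replicate (length \<sigma> - 1) \<beta>"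
    have lL: "length ?L = n" unfolding n_def using n2 by simp
    have c: "esS j R (\<lambda>i. ?L ! i) = esS j R (\<lambda>_. \<beta>)" for j
      by (rule esS_cong) (auto simp: R_def n_def)
    have "esym h ?L = ?L ! 0 * esS h' R (\<lambda>i. ?L ! i) + esS h R (\<lambda>i. ?L ! i)"
      unfolding esym_esS lL ins h' by (rule esS_insert[OF R0(2,1)])
    thus ?thesis unfolding c esS_const[OF R0(2)] cR h' by simp
  qed
  finally show ?thesis .
qed

lemma cauchy_schwarz_sum:
  fixes a b :: "nat \<Rightarrow> real"
  shows "(\<Sum>i\<in>I. a i * b i) \<le> sqrt (\<Sum>i\<in>I. (a i)^2) * sqrt (\<Sum>i\<in>I. (b i)^2)"
proof -
  define A where "A = (\<Sum>i\<in>I. (a i)^2)"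
  define B where "B = (\<Sum>i\<in>I. (b i)^2)"
  define P where "P = (\<Sum>i\<in>I. a i * b i)"
  have A0: "A \<ge> 0" unfolding A_def by (intro sum_nonneg) auto
  have B0: "B \<ge> 0" unfolding B_def by (intro sum_nonneg) auto
  have q: "A * s^2 - 2 * P * s + B \<ge> 0" for s
  proof -
    have "0 \<le> (\<Sum>i\<in>I. (a i * s - b i)^2)" by (intro sum_nonneg) auto
    also have "\<dots> = A * s^2 - 2 * P * s + B"
      unfolding A_def B_def P_def
      by (simp add: power2_eq_square algebra_simps sum.distrib sum_subtractf sum_distrib_left sum_distrib_right)
    finally show ?thesis .
  qed
  have "P^2 \<le> A * B"
  proof (cases "A = 0")
    case True
    have "P = 0"
    proof (rule ccontr)
      assume "P \<noteq> 0"
      have "0 \<le> A * (B / (4*P))^2 - 2 * P * (B / (4*P)) + B" by (rule q)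
      also have "\<dots> = B / 2 - 0" using True \<open>P \<noteq> 0\<close> by (simp add: field_simps)
      finally have "B \<ge> 0" by simp
      have "0 \<le> A * ((B+1) / P)^2 - 2 * P * ((B+1) / P) + B" by (rule q)
      also have "\<dots> = - B - 2" using True \<open>P \<noteq> 0\<close> by (simp add: field_simps)
      finally show False using B0 by simp
    qed
    thus ?thesis using True by simp
  next
    case False
    hence Ap: "A > 0" using A0 by simp
    have "0 \<le> A * (P/A)^2 - 2 * P * (P/A) + B" by (rule q)
    also have "\<dots> = B - P^2 / A" using Ap by (simp add: field_simps power2_eq_square)
    finally have "P^2 / A \<le> B" by simp
    thus ?thesis using Ap by (simp add: divide_le_eq mult.commute)
  qed
  hence "sqrt (P^2) \<le> sqrt (A * B)" by (rule real_sqrt_le_mono)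
  hence "\<bar>P\<bar> \<le> sqrt A * sqrt B" by (simp add: real_sqrt_mult)
  thus ?thesis unfolding P_def A_def B_def by simp
qed

lemma idx_lt: "i1 < (a::nat) \<Longrightarrow> i2 < b \<Longrightarrow> i1*b+i2 < a*b"
proof -
  assume "i1 < a" "i2 < b"
  hence "(i1+1)*b \<le> a*b" by (intro mult_right_mono) auto
  thus ?thesis using \<open>i2 < b\<close> by simp
qed

lemma sum_div_mod:
  fixes g :: "nat \<Rightarrow> 'a::comm_monoid_add"
  shows "(\<Sum>i<a*b. g i) = (\<Sum>i1<a. \<Sum>i2<b. g (i1*b + i2))"
proof -
  have "(\<Sum>i1<a. \<Sum>i2<b. g (i1*b + i2)) = (\<Sum>(i1,i2)\<in>{..<a}\<times>{..<b}. g (i1*b + i2))"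
    by (simp add: sum.cartesian_product)
  also have "\<dots> = (\<Sum>i<a*b. g i)"
    apply (rule sum.reindex_bij_witness[where i = "\<lambda>i. (i div b, i mod b)" and j = "\<lambda>(i1,i2). i1*b+i2"])
    apply (auto simp: idx_lt less_mult_imp_div_less)
    apply (metis mod_less_divisor mult_0_right not_gr_zero not_less_zero)
    done
  finally show ?thesis ..
qed

lemma mtrace_mult:
  assumes "M \<in> carrier_mat n m" "K \<in> carrier_mat m n"
  shows "mtrace (M * K) = (\<Sum>i<n. \<Sum>j<m. M $$ (i,j) * K $$ (j,i))"
  using assms unfolding mtrace_def by (simp add: scalar_prod_def row_def col_def lessThan_atLeast0)

lemma kron_carrier: "M \<in> carrier_mat a a \<Longrightarrow> N \<in> carrier_mat b b \<Longrightarrow> kron M N \<in> carrier_mat (a*b) (a*b)"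
  unfolding kron_def by simp

lemma kron_index:
  assumes "M \<in> carrier_mat a a" "N \<in> carrier_mat b b" "i1 < a" "i2 < b" "j1 < a" "j2 < b"
  shows "kron M N $$ (i1*b+i2, j1*b+j2) = M $$ (i1,j1) * N $$ (i2,j2)"
proof -
  have "i1*b+i2 < a*b" "j1*b+j2 < a*b" using assms idx_lt by auto
  thus ?thesis using assms unfolding kron_def by simp
qed

lemma trace_kron_kron:
  assumes "P \<in> carrier_mat a a" "X \<in> carrier_mat a a" "Q \<in> carrier_mat b b" "Y \<in> carrier_mat b b"
  shows "(\<Sum>i<a*b. \<Sum>j<a*b. kron P Q $$ (i,j) * kron X Y $$ (j,i)) = mtrace (P * X) * mtrace (Q * Y)"
proof -
  have "(\<Sum>i<a*b. \<Sum>j<a*b. kron P Q $$ (i,j) * kron X Y $$ (j,i))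
      = (\<Sum>i1<a. \<Sum>i2<b. \<Sum>j1<a. \<Sum>j2<b. kron P Q $$ (i1*b+i2,j1*b+j2) * kron X Y $$ (j1*b+j2,i1*b+i2))"
    by (simp add: sum_div_mod)
  also have "\<dots> = (\<Sum>i1<a. \<Sum>i2<b. \<Sum>j1<a. \<Sum>j2<b. (P $$ (i1,j1) * X $$ (j1,i1)) * (Q $$ (i2,j2) * Y $$ (j2,i2)))"
    using assms by (intro sum.cong refl) (auto simp: kron_index)
  also have "\<dots> = (\<Sum>i1<a. \<Sum>j1<a. P $$ (i1,j1) * X $$ (j1,i1)) * (\<Sum>i2<b. \<Sum>j2<b. Q $$ (i2,j2) * Y $$ (j2,i2))"
    by (simp add: sum_distrib_left sum_distrib_right sum.swap[of _ "{..<b}" "{..<a}"])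
  also have "\<dots> = mtrace (P * X) * mtrace (Q * Y)"
    using assms by (simp add: mtrace_mult)
  finally show ?thesis .
qed

lemma state_carrier: "state n P \<Longrightarrow> P \<in> carrier_mat n n"
  unfolding state_def psd_mat_def hermitian_mat_def by simp

lemma state_herm: "state n P \<Longrightarrow> hermitian_mat n P"
  unfolding state_def psd_mat_def by simp

lemma herm_carrier: "hermitian_mat n P \<Longrightarrow> P \<in> carrier_mat n n"
  unfolding hermitian_mat_def by simp

lemma herm_one: "hermitian_mat n (1\<^sub>m n)"
  unfolding hermitian_mat_def by auto

lemma sep_trace:
  assumes st: "\<forall>k<m. state dA (\<rho>A k) \<and> state dB (\<rho>B k)"
    and rho: "\<rho> = mat (dA*dB) (dA*dB) (\<lambda>ij. \<Sum>k<m. complex_of_real (p k) * kron (\<rho>A k) (\<rho>B k) $$ ij)"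
    and X: "X \<in> carrier_mat dA dA" and Y: "Y \<in> carrier_mat dB dB"
  shows "mtrace (\<rho> * kron X Y) = (\<Sum>k<m. complex_of_real (p k) * (mtrace (\<rho>A k * X) * mtrace (\<rho>B k * Y)))"
proof -
  let ?N = "dA*dB"
  have rc: "\<rho> \<in> carrier_mat ?N ?N" unfolding rho by simp
  have kc: "kron X Y \<in> carrier_mat ?N ?N" using kron_carrier[OF X Y] .
  have "mtrace (\<rho> * kron X Y) = (\<Sum>i<?N. \<Sum>j<?N. \<rho> $$ (i,j) * kron X Y $$ (j,i))"
    by (rule mtrace_mult[OF rc kc])
  also have "\<dots> = (\<Sum>i<?N. \<Sum>j<?N. \<Sum>k<m. complex_of_real (p k) * (kron (\<rho>A k) (\<rho>B k) $$ (i,j) * kron X Y $$ (j,i)))"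
    unfolding rho by (intro sum.cong refl) (simp add: sum_distrib_right mult.assoc)
  also have "\<dots> = (\<Sum>i<?N. \<Sum>k<m. \<Sum>j<?N. complex_of_real (p k) * (kron (\<rho>A k) (\<rho>B k) $$ (i,j) * kron X Y $$ (j,i)))"
    by (intro sum.cong refl) (rule sum.swap)
  also have "\<dots> = (\<Sum>k<m. \<Sum>i<?N. \<Sum>j<?N. complex_of_real (p k) * (kron (\<rho>A k) (\<rho>B k) $$ (i,j) * kron X Y $$ (j,i)))"
    by (rule sum.swap)
  also have "\<dots> = (\<Sum>k<m. complex_of_real (p k) * (\<Sum>i<?N. \<Sum>j<?N. kron (\<rho>A k) (\<rho>B k) $$ (i,j) * kron X Y $$ (j,i)))"
    by (simp only: sum_distrib_left)
  also have "\<dots> = (\<Sum>k<m. complex_of_real (p k) * (mtrace (\<rho>A k * X) * mtrace (\<rho>B k * Y)))"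
  proof (rule sum.cong[OF refl])
    fix k assume "k \<in> {..<m}"
    hence "state dA (\<rho>A k)" "state dB (\<rho>B k)" using st by auto
    thus "complex_of_real (p k) * (\<Sum>i<?N. \<Sum>j<?N. kron (\<rho>A k) (\<rho>B k) $$ (i,j) * kron X Y $$ (j,i))
      = complex_of_real (p k) * (mtrace (\<rho>A k * X) * mtrace (\<rho>B k * Y))"
      using trace_kron_kron[OF state_carrier X state_carrier Y] by simp
  qed
  finally show ?thesis .
qed

lemma herm_cnj: "hermitian_mat n X \<Longrightarrow> i < n \<Longrightarrow> j < n \<Longrightarrow> cnj (X $$ (i,j)) = X $$ (j,i)"
  unfolding hermitian_mat_def by (metis complex_cnj_cnj)

lemma herm_trace_real:
  assumes "hermitian_mat n X" "hermitian_mat n Y"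
  shows "cnj (mtrace (X * Y)) = mtrace (X * Y)"
proof -
  have c: "X \<in> carrier_mat n n" "Y \<in> carrier_mat n n" using assms herm_carrier by auto
  have "cnj (mtrace (X * Y)) = (\<Sum>i<n. \<Sum>j<n. cnj (X $$ (i,j)) * cnj (Y $$ (j,i)))"
    unfolding mtrace_mult[OF c] by simp
  also have "\<dots> = (\<Sum>i<n. \<Sum>j<n. X $$ (j,i) * Y $$ (i,j))"
    using assms by (intro sum.cong refl) (simp add: herm_cnj)
  also have "\<dots> = (\<Sum>j<n. \<Sum>i<n. X $$ (j,i) * Y $$ (i,j))" by (rule sum.swap)
  also have "\<dots> = mtrace (X * Y)" unfolding mtrace_mult[OF c] ..
  finally show ?thesis .
qed

lemma herm_trace_Im: "hermitian_mat n X \<Longrightarrow> hermitian_mat n Y \<Longrightarrow> Im (mtrace (X * Y)) = 0"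
  using herm_trace_real by (metis cnj.simps(2) neg_equal_zero)

lemma herm_trace_of_real: "hermitian_mat n X \<Longrightarrow> hermitian_mat n Y \<Longrightarrow> mtrace (X * Y) = complex_of_real (Re (mtrace (X * Y)))"
  using herm_trace_Im by (simp add: complex_eq_iff)

lemma parseval_c:
  assumes onb: "herm_onb n As" and X: "X \<in> carrier_mat n n" and Y: "Y \<in> carrier_mat n n"
  shows "(\<Sum>i<n^2. mtrace (X * As!i) * cnj (mtrace (Y * As!i))) = (\<Sum>p<n. \<Sum>q<n. X $$ (p,q) * cnj (Y $$ (p,q)))"
proof -
  define N where "N = n*n"
  have N2: "n^2 = N" unfolding N_def by (simp add: power2_eq_square)
  have herm: "\<And>i. i < N \<Longrightarrow> hermitian_mat n (As ! i)" using onb unfolding herm_onb_def N2 by auto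
  have orth: "\<And>i j. i < N \<Longrightarrow> j < N \<Longrightarrow> mtrace (As ! i * As ! j) = (if i = j then 1 else 0)"
    using onb unfolding herm_onb_def N2 by auto
  define W where "W = mat N N (\<lambda>(r,i). (As!i) $$ (r mod n, r div n))"
  define Wh where "Wh = mat N N (\<lambda>(i,r). cnj (W $$ (r,i)))"
  have Wc: "W \<in> carrier_mat N N" and Whc: "Wh \<in> carrier_mat N N" unfolding W_def Wh_def by auto
  have WW: "Wh * W = 1\<^sub>m N"
  proof (rule eq_matI)
    fix i j assume ij: "i < dim_row (1\<^sub>m N)" "j < dim_col (1\<^sub>m N)"
    hence ij': "i < N" "j < N" by auto
    have "(Wh * W) $$ (i,j) = (\<Sum>r<N. cnj (W $$ (r,i)) * W $$ (r,j))"
      using ij' Wc Whc by (simp add: scalar_prod_def row_def col_def Wh_def lessThan_atLeast0)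
    also have "\<dots> = (\<Sum>p<n. \<Sum>q<n. cnj ((As!i) $$ (q,p)) * (As!j) $$ (q,p))"
      unfolding N_def sum_div_mod
    proof (intro sum.cong refl)
      fix p q assume "p \<in> {..<n}" "q \<in> {..<n}"
      hence pq: "p < n" "q < n" by auto
      hence "p * n + q < n * n" using idx_lt by blast
      thus "cnj (W $$ (p * n + q, i)) * W $$ (p * n + q, j) = cnj ((As!i) $$ (q,p)) * (As!j) $$ (q,p)"
        using ij' pq unfolding W_def N_def by simp
    qed
    also have "\<dots> = (\<Sum>p<n. \<Sum>q<n. (As!i) $$ (p,q) * (As!j) $$ (q,p))"
      using herm ij' by (intro sum.cong refl) (simp add: herm_cnj[OF herm[OF ij'(1)]])
    also have "\<dots> = mtrace (As!i * As!j)"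
      using mtrace_mult[OF herm_carrier[OF herm[OF ij'(1)]] herm_carrier[OF herm[OF ij'(2)]]] by simp
    also have "\<dots> = 1\<^sub>m N $$ (i,j)" using orth ij' by simp
    finally show "(Wh * W) $$ (i,j) = 1\<^sub>m N $$ (i,j)" .
  qed (use Wc Whc in auto)
  have WW2: "W * Wh = 1\<^sub>m N" by (rule mat_mult_left_right_inverse[OF Whc Wc WW])
  have WWe: "(\<Sum>i<N. W $$ (r,i) * cnj (W $$ (s,i))) = (if r = s then 1 else 0)" if rs: "r < N" "s < N" for r s
  proof -
    have "(W * Wh) $$ (r,s) = (\<Sum>i<N. W $$ (r,i) * cnj (W $$ (s,i)))"
      using rs Wc Whc by (simp add: scalar_prod_def row_def col_def Wh_def lessThan_atLeast0)
    thus ?thesis using WW2 rs by simp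
  qed
  define x where "x = (\<lambda>r. X $$ (r div n, r mod n))"
  define y where "y = (\<lambda>r. Y $$ (r div n, r mod n))"
  have tr: "mtrace (Z * As!i) = (\<Sum>r<N. z r * W $$ (r,i))"
    if Z: "Z \<in> carrier_mat n n" and z: "z = (\<lambda>r. Z $$ (r div n, r mod n))" and i: "i < N" for Z z i
  proof -
    have "mtrace (Z * As!i) = (\<Sum>p<n. \<Sum>q<n. Z $$ (p,q) * (As!i) $$ (q,p))"
      using herm_carrier[OF herm[OF i]] Z by (simp add: mtrace_mult)
    also have "\<dots> = (\<Sum>r<N. z r * W $$ (r,i))"
      unfolding N_def sum_div_mod
    proof (intro sum.cong refl)
      fix p q assume "p \<in> {..<n}" "q \<in> {..<n}"
      hence pq: "p < n" "q < n" by auto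
      hence "p * n + q < n * n" using idx_lt by blast
      thus "Z $$ (p,q) * (As!i) $$ (q,p) = z (p * n + q) * W $$ (p * n + q, i)"
        using i pq unfolding W_def N_def z by simp
    qed
    finally show ?thesis .
  qed
  have "(\<Sum>i<n^2. mtrace (X * As!i) * cnj (mtrace (Y * As!i)))
      = (\<Sum>i<N. (\<Sum>r<N. x r * W $$ (r,i)) * (\<Sum>s<N. cnj (y s) * cnj (W $$ (s,i))))"
    unfolding N2 using tr[OF X x_def] tr[OF Y y_def] by (intro sum.cong refl) simp
  also have "\<dots> = (\<Sum>i<N. \<Sum>r<N. \<Sum>s<N. x r * cnj (y s) * (W $$ (r,i) * cnj (W $$ (s,i))))"
    by (simp add: sum_product algebra_simps)
  also have "\<dots> = (\<Sum>r<N. \<Sum>i<N. \<Sum>s<N. x r * cnj (y s) * (W $$ (r,i) * cnj (W $$ (s,i))))"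
    by (rule sum.swap)
  also have "\<dots> = (\<Sum>r<N. \<Sum>s<N. \<Sum>i<N. x r * cnj (y s) * (W $$ (r,i) * cnj (W $$ (s,i))))"
    by (rule sum.cong[OF refl], rule sum.swap)
  also have "\<dots> = (\<Sum>r<N. \<Sum>s<N. x r * cnj (y s) * (if r = s then 1 else 0))"
    by (intro sum.cong refl) (simp add: WWe flip: sum_distrib_left)
  also have "\<dots> = (\<Sum>r<N. x r * cnj (y r))"
    by (simp add: if_distrib cong: if_cong)
  also have "\<dots> = (\<Sum>p<n. \<Sum>q<n. X $$ (p,q) * cnj (Y $$ (p,q)))"
    unfolding N_def sum_div_mod x_def y_def by simp
  finally show ?thesis .
qed

lemma onb_herm: "herm_onb n As \<Longrightarrow> i < n^2 \<Longrightarrow> hermitian_mat n (As ! i)"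
  unfolding herm_onb_def by auto

lemma parseval:
  assumes onb: "herm_onb n As" and X: "hermitian_mat n X" and Y: "hermitian_mat n Y"
  shows "(\<Sum>i<n^2. Re (mtrace (X * As!i)) * Re (mtrace (Y * As!i))) = Re (mtrace (X * Y))"
proof -
  have Xc: "X \<in> carrier_mat n n" and Yc: "Y \<in> carrier_mat n n" using X Y herm_carrier by auto
  have "(\<Sum>i<n^2. Re (mtrace (X * As!i)) * Re (mtrace (Y * As!i)))
      = Re (\<Sum>i<n^2. mtrace (X * As!i) * cnj (mtrace (Y * As!i)))"
    using herm_trace_Im[OF Y onb_herm[OF onb]] by simp
  also have "\<dots> = Re (\<Sum>p<n. \<Sum>q<n. X $$ (p,q) * cnj (Y $$ (p,q)))"
    unfolding parseval_c[OF onb Xc Yc] ..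
  also have "(\<Sum>p<n. \<Sum>q<n. X $$ (p,q) * cnj (Y $$ (p,q))) = mtrace (X * Y)"
    unfolding mtrace_mult[OF Xc Yc] using Y by (intro sum.cong refl) (simp add: herm_cnj)
  finally show ?thesis .
qed

lemma quad_disc:
  fixes A P B :: real
  assumes q: "\<And>s. A * s^2 - 2 * P * s + B \<ge> 0" and A0: "A \<ge> 0" and B0: "B \<ge> 0"
  shows "P^2 \<le> A * B"
proof (cases "A = 0")
  case True
  have "P = 0"
  proof (rule ccontr)
    assume "P \<noteq> 0"
    have "0 \<le> A * ((B+1) / P)^2 - 2 * P * ((B+1) / P) + B" by (rule q)
    also have "\<dots> = - B - 2" using True \<open>P \<noteq> 0\<close> by (simp add: field_simps)
    finally show False using B0 by simp
  qed
  thus ?thesis using True by simp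
next
  case False
  hence Ap: "A > 0" using A0 by simp
  have "0 \<le> A * (P/A)^2 - 2 * P * (P/A) + B" by (rule q)
  also have "\<dots> = B - P^2 / A" using Ap by (simp add: field_simps power2_eq_square)
  finally have "P^2 / A \<le> B" by simp
  thus ?thesis using Ap by (simp add: divide_le_eq mult.commute)
qed

definition dl :: "nat \<Rightarrow> nat \<Rightarrow> complex" where "dl k a = (if a = k then 1 else 0)"

lemma sum_dl: "k < n \<Longrightarrow> (\<Sum>a<n. dl k a * f a) = f k"
proof -
  assume k: "k < n"
  have "(\<Sum>a<n. dl k a * f a) = (\<Sum>a<n. if a = k then f a else 0)"
    unfolding dl_def by (intro sum.cong) auto
  thus ?thesis using k by simp
qed

lemma cnj_dl[simp]: "cnj (dl k a) = dl k a" unfolding dl_def by simp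

lemma psd_form2:
  assumes P: "psd_mat n P" and i: "i < n" and j: "j < n" and ij: "i \<noteq> j"
  shows "0 \<le> Re (cnj c * c * P $$ (i,i) + cnj c * P $$ (i,j) + c * P $$ (j,i) + P $$ (j,j))"
proof -
  define v where "v = (\<lambda>l. c * dl i l + dl j l)"
  have 1: "(\<Sum>b<n. P $$ (a,b) * v b) = c * P $$ (a,i) + P $$ (a,j)" for a
  proof -
    have "(\<Sum>b<n. P $$ (a,b) * v b) = (\<Sum>b<n. c * (dl i b * P $$ (a,b)) + dl j b * P $$ (a,b))"
      unfolding v_def by (intro sum.cong refl) (simp add: algebra_simps)
    also have "\<dots> = c * (\<Sum>b<n. dl i b * P $$ (a,b)) + (\<Sum>b<n. dl j b * P $$ (a,b))"
      by (simp only: sum.distrib sum_distrib_left)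
    finally show ?thesis using i j by (simp add: sum_dl)
  qed
  have "(\<Sum>a<n. \<Sum>b<n. cnj (v a) * P $$ (a,b) * v b) = (\<Sum>a<n. cnj (v a) * (\<Sum>b<n. P $$ (a,b) * v b))"
    by (simp only: sum_distrib_left mult.assoc)
  also have "\<dots> = (\<Sum>a<n. cnj (v a) * (c * P $$ (a,i) + P $$ (a,j)))"
    by (simp only: 1)
  also have "\<dots> = (\<Sum>a<n. cnj c * (dl i a * (c * P $$ (a,i) + P $$ (a,j))) + dl j a * (c * P $$ (a,i) + P $$ (a,j)))"
    unfolding v_def by (intro sum.cong refl) (simp add: algebra_simps)
  also have "\<dots> = cnj c * (\<Sum>a<n. dl i a * (c * P $$ (a,i) + P $$ (a,j))) + (\<Sum>a<n. dl j a * (c * P $$ (a,i) + P $$ (a,j)))"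
    by (simp only: sum.distrib sum_distrib_left)
  also have "\<dots> = cnj c * (c * P $$ (i,i) + P $$ (i,j)) + (c * P $$ (j,i) + P $$ (j,j))"
    using sum_dl[OF i, of "\<lambda>a. c * P $$ (a,i) + P $$ (a,j)"] sum_dl[OF j, of "\<lambda>a. c * P $$ (a,i) + P $$ (a,j)"]
    by simp
  also have "\<dots> = cnj c * c * P $$ (i,i) + cnj c * P $$ (i,j) + c * P $$ (j,i) + P $$ (j,j)"
    by (simp add: algebra_simps)
  finally have e: "(\<Sum>a<n. \<Sum>b<n. cnj (v a) * P $$ (a,b) * v b) = cnj c * c * P $$ (i,i) + cnj c * P $$ (i,j) + c * P $$ (j,i) + P $$ (j,j)" .
  have "0 \<le> Re (\<Sum>a<n. \<Sum>b<n. cnj (v a) * P $$ (a,b) * v b)" using P unfolding psd_mat_def by blast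
  thus ?thesis unfolding e .
qed

lemma psd_diag: "psd_mat n P \<Longrightarrow> i < n \<Longrightarrow> Re (P $$ (i,i)) \<ge> 0 \<and> Im (P $$ (i,i)) = 0"
proof -
  assume P: "psd_mat n P" and i: "i < n"
  have "(\<Sum>a<n. \<Sum>b<n. cnj (dl i a) * P $$ (a,b) * dl i b) = (\<Sum>a<n. dl i a * (\<Sum>b<n. dl i b * P $$ (a,b)))"
    by (simp only: sum_distrib_left cnj_dl mult.assoc mult.commute[of "P $$ _" "dl i _"])
  also have "\<dots> = P $$ (i,i)" using i by (simp add: sum_dl)
  finally have e: "(\<Sum>a<n. \<Sum>b<n. cnj (dl i a) * P $$ (a,b) * dl i b) = P $$ (i,i)" .
  have "0 \<le> Re (\<Sum>a<n. \<Sum>b<n. cnj (dl i a) * P $$ (a,b) * dl i b)" using P unfolding psd_mat_def by blast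
  hence "Re (P $$ (i,i)) \<ge> 0" unfolding e .
  moreover have "Im (P $$ (i,i)) = 0" using herm_cnj[of n P i i] P i unfolding psd_mat_def
    by (metis cnj.simps(2) neg_equal_zero)
  ultimately show ?thesis by simp
qed

lemma quad_expand: "cnj (- complex_of_real s * z) * (- complex_of_real s * z) * complex_of_real a + cnj (- complex_of_real s * z) * z + (- complex_of_real s * z) * cnj z + complex_of_real b
   = complex_of_real ((s^2*a - 2*s) * (cmod z)^2 + b)"
proof -
  have "cnj (- complex_of_real s * z) * (- complex_of_real s * z) * complex_of_real a + cnj (- complex_of_real s * z) * z + (- complex_of_real s * z) * cnj z + complex_of_real b
    = (complex_of_real (s^2 * a - 2*s)) * (z * cnj z) + complex_of_real b"
    by (simp add: algebra_simps power2_eq_square)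
  also have "\<dots> = complex_of_real ((s^2*a - 2*s) * (cmod z)^2 + b)"
    by (simp flip: complex_norm_square)
  finally show ?thesis .
qed

lemma psd_offdiag:
  assumes P: "psd_mat n P" and i: "i < n" and j: "j < n"
  shows "(cmod (P $$ (i,j)))^2 \<le> Re (P $$ (i,i)) * Re (P $$ (j,j))"
proof (cases "i = j")
  case True
  have "Im (P $$ (i,i)) = 0" using psd_diag[OF P i] by simp
  thus ?thesis using True by (simp add: cmod_def power2_eq_square)
next
  case False
  define z where "z = P $$ (i,j)"
  define a where "a = Re (P $$ (i,i))"
  define b where "b = Re (P $$ (j,j))"
  have H: "hermitian_mat n P" using P unfolding psd_mat_def by simp
  have zji: "P $$ (j,i) = cnj z" unfolding z_def using herm_cnj[OF H i j] by simp
  have a0: "a \<ge> 0" and b0: "b \<ge> 0" using psd_diag[OF P i] psd_diag[OF P j] a_def b_def by auto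
  have Pii: "P $$ (i,i) = complex_of_real a" "P $$ (j,j) = complex_of_real b"
    using psd_diag[OF P i] psd_diag[OF P j] a_def b_def by (auto simp: complex_eq_iff)
  have q: "((cmod z)^2 * a) * s^2 - 2 * (cmod z)^2 * s + b \<ge> 0" for s
  proof -
    define c where "c = - complex_of_real s * z"
    have "0 \<le> Re (cnj c * c * P $$ (i,i) + cnj c * P $$ (i,j) + c * P $$ (j,i) + P $$ (j,j))"
      by (rule psd_form2[OF P i j False])
    also have "\<dots> = (s^2*a - 2*s) * (cmod z)^2 + b"
      unfolding c_def Pii zji z_def[symmetric] quad_expand by simp
    also have "\<dots> = ((cmod z)^2 * a) * s^2 - 2 * (cmod z)^2 * s + b"
      by (simp add: algebra_simps)
    finally show ?thesis .
  qed
  have "((cmod z)^2)^2 \<le> ((cmod z)^2 * a) * b"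
    by (rule quad_disc[OF q]) (use a0 b0 in auto)
  hence "(cmod z)^2 * (cmod z)^2 \<le> (cmod z)^2 * (a * b)" by (simp add: power2_eq_square algebra_simps)
  hence "(cmod z)^2 \<le> a * b" if "z \<noteq> 0"
    by (rule mult_left_le_imp_le) (use that in simp)
  moreover have "0 \<le> a * b" using a0 b0 by simp
  ultimately have "(cmod z)^2 \<le> a * b" by (cases "z = 0") auto
  thus ?thesis unfolding z_def a_def b_def .
qed

lemma purity:
  assumes S: "state n P"
  shows "Re (mtrace (P * P)) \<le> 1"
proof -
  have P: "psd_mat n P" and H: "hermitian_mat n P" and tr: "mtrace P = 1"
    using S unfolding state_def psd_mat_def by auto
  have Pc: "P \<in> carrier_mat n n" using H herm_carrier by auto
  have "Re (mtrace (P * P)) = (\<Sum>i<n. \<Sum>j<n. Re (P $$ (i,j) * P $$ (j,i)))"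
    unfolding mtrace_mult[OF Pc Pc] by simp
  also have "\<dots> = (\<Sum>i<n. \<Sum>j<n. (cmod (P $$ (i,j)))^2)"
  proof (intro sum.cong refl)
    fix i j assume "i \<in> {..<n}" "j \<in> {..<n}"
    hence "P $$ (j,i) = cnj (P $$ (i,j))" using herm_cnj[OF H] by auto
    thus "Re (P $$ (i,j) * P $$ (j,i)) = (cmod (P $$ (i,j)))^2"
      by (simp add: cmod_def power2_eq_square)
  qed
  also have "\<dots> \<le> (\<Sum>i<n. \<Sum>j<n. Re (P $$ (i,i)) * Re (P $$ (j,j)))"
    using psd_offdiag[OF P] by (intro sum_mono) auto
  also have "\<dots> = (\<Sum>i<n. Re (P $$ (i,i)))^2"
    by (simp add: power2_eq_square sum_product)
  also have "(\<Sum>i<n. Re (P $$ (i,i))) = 1"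
  proof -
    have "(\<Sum>i<n. P $$ (i,i)) = 1" using tr Pc unfolding mtrace_def by simp
    hence "Re (\<Sum>i<n. P $$ (i,i)) = 1" by simp
    thus ?thesis by simp
  qed
  finally show ?thesis by simp
qed

lemma svd_facts:
  assumes sv: "singular_values C \<sigma>" and C: "C \<in> carrier_mat NA NB"
  obtains U V where
    "\<And>i j. i < NA \<Longrightarrow> j < NB \<Longrightarrow> C $$ (i,j) = (\<Sum>k<length \<sigma>. U $$ (i,k) * \<sigma> ! k * V $$ (j,k))"
    "\<And>k l. k < NA \<Longrightarrow> l < NA \<Longrightarrow> (\<Sum>i<NA. U $$ (i,k) * U $$ (i,l)) = (if k = l then 1 else 0)"
    "\<And>i j. i < NA \<Longrightarrow> j < NA \<Longrightarrow> (\<Sum>k<NA. U $$ (i,k) * U $$ (j,k)) = (if i = j then 1 else 0)"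
    "\<And>k l. k < NB \<Longrightarrow> l < NB \<Longrightarrow> (\<Sum>i<NB. V $$ (i,k) * V $$ (i,l)) = (if k = l then 1 else 0)"
    "\<And>i j. i < NB \<Longrightarrow> j < NB \<Longrightarrow> (\<Sum>k<NB. V $$ (i,k) * V $$ (j,k)) = (if i = j then 1 else 0)"
proof -
  have dims: "dim_row C = NA" "dim_col C = NB" using C by auto
  from sv obtain U V where len: "length \<sigma> = min NA NB"
    and U: "real_orthogonal NA U" and V: "real_orthogonal NB V"
    and CU: "C = U * mat NA NB (\<lambda>(i,j). if i = j then \<sigma> ! i else 0) * transpose_mat V"
    unfolding singular_values_def dims by blast
  have Uc: "U \<in> carrier_mat NA NA" and UtU: "transpose_mat U * U = 1\<^sub>m NA" using U unfolding real_orthogonal_def by auto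
  have Vc: "V \<in> carrier_mat NB NB" and VtV: "transpose_mat V * V = 1\<^sub>m NB" using V unfolding real_orthogonal_def by auto
  have UUt: "U * transpose_mat U = 1\<^sub>m NA"
    by (rule mat_mult_left_right_inverse[OF _ Uc UtU]) (use Uc in simp)
  have VVt: "V * transpose_mat V = 1\<^sub>m NB"
    by (rule mat_mult_left_right_inverse[OF _ Vc VtV]) (use Vc in simp)
  have o1: "(\<Sum>i<N. W $$ (i,k) * W $$ (i,l)) = (if k = l then 1 else 0)"
    if W: "W \<in> carrier_mat N N" and WtW: "transpose_mat W * W = 1\<^sub>m N" and kl: "k < N" "l < N" for W :: "real mat" and N k l
  proof -
    have "(transpose_mat W * W) $$ (k,l) = (\<Sum>i<N. W $$ (i,k) * W $$ (i,l))"
      using W kl by (simp add: scalar_prod_def row_def col_def lessThan_atLeast0)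
    thus ?thesis using WtW kl by simp
  qed
  have o2: "(\<Sum>k<N. W $$ (i,k) * W $$ (j,k)) = (if i = j then 1 else 0)"
    if W: "W \<in> carrier_mat N N" and WWt: "W * transpose_mat W = 1\<^sub>m N" and ij: "i < N" "j < N" for W :: "real mat" and N i j
  proof -
    have "(W * transpose_mat W) $$ (i,j) = (\<Sum>k<N. W $$ (i,k) * W $$ (j,k))"
      using W ij by (simp add: scalar_prod_def row_def col_def lessThan_atLeast0)
    thus ?thesis using WWt ij by simp
  qed
  have ent: "C $$ (i,j) = (\<Sum>k<length \<sigma>. U $$ (i,k) * \<sigma> ! k * V $$ (j,k))" if ij: "i < NA" "j < NB" for i j
  proof -
    define S where "S = mat NA NB (\<lambda>(i,j). if i = j then \<sigma> ! i else (0::real))"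
    have Sc: "S \<in> carrier_mat NA NB" unfolding S_def by simp
    have "C $$ (i,j) = (\<Sum>k<NA. U $$ (i,k) * (\<Sum>l<NB. S $$ (k,l) * V $$ (j,l)))"
      unfolding CU S_def[symmetric] using ij Uc Vc Sc
      by (simp add: scalar_prod_def row_def col_def lessThan_atLeast0)
    also have "\<dots> = (\<Sum>k<NA. if k < NB then U $$ (i,k) * \<sigma> ! k * V $$ (j,k) else 0)"
    proof (rule sum.cong[OF refl])
      fix k assume k: "k \<in> {..<NA}"
      have "(\<Sum>l<NB. S $$ (k,l) * V $$ (j,l)) = (\<Sum>l<NB. if l = k then \<sigma> ! k * V $$ (j,l) else 0)"
        using k unfolding S_def by (intro sum.cong refl) auto
      also have "\<dots> = (if k < NB then \<sigma> ! k * V $$ (j,k) else 0)" by simp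
      finally show "U $$ (i,k) * (\<Sum>l<NB. S $$ (k,l) * V $$ (j,l)) = (if k < NB then U $$ (i,k) * \<sigma> ! k * V $$ (j,k) else 0)"
        by simp
    qed
    also have "\<dots> = (\<Sum>k\<in>{k\<in>{..<NA}. k < NB}. U $$ (i,k) * \<sigma> ! k * V $$ (j,k))"
      by (rule sum.inter_filter[symmetric]) simp
    also have "{k\<in>{..<NA}. k < NB} = {..<length \<sigma>}" using len by auto
    finally show ?thesis .
  qed
  show ?thesis
    by (rule that[OF ent o1[OF Uc UtU] o2[OF Uc UUt] o1[OF Vc VtV] o2[OF Vc VVt]])
qed

lemma bessel:
  assumes orth: "\<And>i j. i < N \<Longrightarrow> j < N \<Longrightarrow> (\<Sum>k<N. U $$ (i,k) * U $$ (j,k)) = (if i = j then 1 else (0::real))"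
    and mN: "m \<le> N"
  shows "(\<Sum>k<m. (\<Sum>i<N. U $$ (i,k) * x i)^2) \<le> (\<Sum>i<N. (x i)^2)"
proof -
  have "(\<Sum>k<m. (\<Sum>i<N. U $$ (i,k) * x i)^2) \<le> (\<Sum>k<N. (\<Sum>i<N. U $$ (i,k) * x i)^2)"
    using mN by (intro sum_mono2) auto
  also have "\<dots> = (\<Sum>k<N. \<Sum>i<N. \<Sum>j<N. x i * x j * (U $$ (i,k) * U $$ (j,k)))"
    by (simp add: power2_eq_square sum_product algebra_simps)
  also have "\<dots> = (\<Sum>i<N. \<Sum>k<N. \<Sum>j<N. x i * x j * (U $$ (i,k) * U $$ (j,k)))"
    by (rule sum.swap)
  also have "\<dots> = (\<Sum>i<N. \<Sum>j<N. \<Sum>k<N. x i * x j * (U $$ (i,k) * U $$ (j,k)))"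
    by (rule sum.cong[OF refl], rule sum.swap)
  also have "\<dots> = (\<Sum>i<N. \<Sum>j<N. x i * x j * (if i = j then 1 else 0))"
    using orth by (intro sum.cong refl) (simp add: sum_distrib_left[symmetric])
  also have "\<dots> = (\<Sum>i<N. (x i)^2)"
    by (simp add: power2_eq_square if_distrib cong: if_cong)
  finally show ?thesis .
qed

lemma T_bound:
  assumes oU: "\<And>i j. i < NA \<Longrightarrow> j < NA \<Longrightarrow> (\<Sum>k<NA. U $$ (i,k) * U $$ (j,k)) = (if i = j then 1 else (0::real))"
    and oV: "\<And>i j. i < NB \<Longrightarrow> j < NB \<Longrightarrow> (\<Sum>k<NB. V $$ (i,k) * V $$ (j,k)) = (if i = j then 1 else (0::real))"
    and mA: "m \<le> NA" and mB: "m \<le> NB"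
  shows "(\<Sum>k<m. (\<Sum>i<NA. U $$ (i,k) * x i) * (\<Sum>j<NB. V $$ (j,k) * y j))
     \<le> sqrt (\<Sum>i<NA. (x i)^2) * sqrt (\<Sum>j<NB. (y j)^2)"
proof -
  have "(\<Sum>k<m. (\<Sum>i<NA. U $$ (i,k) * x i) * (\<Sum>j<NB. V $$ (j,k) * y j))
     \<le> sqrt (\<Sum>k<m. (\<Sum>i<NA. U $$ (i,k) * x i)^2) * sqrt (\<Sum>k<m. (\<Sum>j<NB. V $$ (j,k) * y j)^2)"
    by (rule cauchy_schwarz_sum)
  also have "\<dots> \<le> sqrt (\<Sum>i<NA. (x i)^2) * sqrt (\<Sum>j<NB. (y j)^2)"
    by (intro mult_mono real_sqrt_le_mono bessel[OF oU mA] bessel[OF oV mB]) (auto intro: sum_nonneg)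
  finally show ?thesis .
qed

lemma cs_abs:
  fixes a b :: "nat \<Rightarrow> real"
  shows "(\<Sum>i\<in>I. \<bar>a i\<bar> * \<bar>b i\<bar>) \<le> sqrt (\<Sum>i\<in>I. (a i)^2) * sqrt (\<Sum>i\<in>I. (b i)^2)"
  using cauchy_schwarz_sum[of "\<lambda>i. \<bar>a i\<bar>" "\<lambda>i. \<bar>b i\<bar>" I] by simp

lemma mtrace_one_right: "M \<in> carrier_mat n n \<Longrightarrow> mtrace (M * 1\<^sub>m n) = mtrace M"
  by simp

lemma state_trace1: "state n P \<Longrightarrow> mtrace (P * 1\<^sub>m n) = 1"
  using state_carrier[of n P] unfolding state_def by simp

lemma herm_sub_scalar:
  assumes H: "hermitian_mat n X" and c: "Im c = 0"
  shows "hermitian_mat n (X - c \<cdot>\<^sub>m 1\<^sub>m n)"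
proof -
  have Xc: "X \<in> carrier_mat n n" using H herm_carrier by auto
  have cc: "cnj c = c" using c by (simp add: complex_eq_iff)
  show ?thesis unfolding hermitian_mat_def
  proof (intro conjI allI impI)
    show "X - c \<cdot>\<^sub>m 1\<^sub>m n \<in> carrier_mat n n" by (intro minus_carrier_mat smult_carrier_mat one_carrier_mat)
    fix i j assume ij: "i < n" "j < n"
    have "cnj (X $$ (j,i)) = X $$ (i,j)" using herm_cnj[OF H ij(2,1)] .
    thus "(X - c \<cdot>\<^sub>m 1\<^sub>m n) $$ (i, j) = cnj ((X - c \<cdot>\<^sub>m 1\<^sub>m n) $$ (j, i))"
      using ij Xc cc by auto
  qed
qed

lemma mtrace_sub_scalar:
  assumes Pc: "P \<in> carrier_mat n n" and Xc: "X \<in> carrier_mat n n"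
  shows "mtrace (P * (X - c \<cdot>\<^sub>m 1\<^sub>m n)) = mtrace (P * X) - c * mtrace P"
proof -
  have Yc: "X - c \<cdot>\<^sub>m 1\<^sub>m n \<in> carrier_mat n n" by (intro minus_carrier_mat smult_carrier_mat one_carrier_mat)
  have "mtrace (P * (X - c \<cdot>\<^sub>m 1\<^sub>m n)) = (\<Sum>i<n. \<Sum>j<n. P $$ (i,j) * X $$ (j,i) - c * (P $$ (i,j) * (if j = i then 1 else 0)))"
    unfolding mtrace_mult[OF Pc Yc] using Xc by (intro sum.cong refl) (auto simp: algebra_simps)
  also have "\<dots> = (\<Sum>i<n. \<Sum>j<n. P $$ (i,j) * X $$ (j,i)) - c * (\<Sum>i<n. \<Sum>j<n. P $$ (i,j) * (if j = i then 1 else 0))"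
    by (simp add: sum_subtractf sum_distrib_left)
  also have "(\<Sum>i<n. \<Sum>j<n. P $$ (i,j) * (if j = i then 1 else 0)) = mtrace P"
    unfolding mtrace_def using Pc by (simp add: if_distrib cong: if_cong)
  finally show ?thesis unfolding mtrace_mult[OF Pc Xc] .
qed

lemma mtrace_sub_scalar_self:
  assumes Xc: "X \<in> carrier_mat n n"
  shows "mtrace (X - c \<cdot>\<^sub>m 1\<^sub>m n) = mtrace X - c * of_nat n"
proof -
  have "mtrace (X - c \<cdot>\<^sub>m 1\<^sub>m n) = (\<Sum>i<n. X $$ (i,i) - c)"
    unfolding mtrace_def using Xc by (intro sum.cong) auto
  thus ?thesis unfolding mtrace_def using Xc by (simp add: sum_subtractf)
qed

lemma fnf_A:
  assumes st: "\<forall>k<m. state dA (\<rho>A k) \<and> state dB (\<rho>B k)"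
    and rho: "\<rho> = mat (dA*dB) (dA*dB) (\<lambda>ij. \<Sum>k<m. complex_of_real (p k) * kron (\<rho>A k) (\<rho>B k) $$ ij)"
    and fnf: "FNF dA dB \<rho>" and onb: "herm_onb dA As" and i: "i < dA^2" and dA: "dA > 0"
  shows "(\<Sum>k<m. p k * (Re (mtrace (\<rho>A k * As!i)) - Re (mtrace (1\<^sub>m dA * As!i)) / dA)) = 0"
proof -
  have H: "hermitian_mat dA (As!i)" using onb i unfolding herm_onb_def by auto
  have Ac: "As!i \<in> carrier_mat dA dA" using H herm_carrier by auto
  define c where "c = complex_of_real (Re (mtrace (1\<^sub>m dA * As!i)) / dA)"
  have trA: "mtrace (As!i) = complex_of_real (Re (mtrace (1\<^sub>m dA * As!i)))"
    using herm_trace_of_real[OF herm_one H] Ac by simp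
  define A where "A = As!i - c \<cdot>\<^sub>m 1\<^sub>m dA"
  have HA: "hermitian_mat dA A" unfolding A_def c_def by (rule herm_sub_scalar[OF H]) simp
  have tA: "mtrace A = 0" unfolding A_def mtrace_sub_scalar_self[OF Ac] trA c_def using dA by simp
  have "mtrace (\<rho> * kron A (1\<^sub>m dB)) = 0" using fnf HA tA unfolding FNF_def by blast
  moreover have "mtrace (\<rho> * kron A (1\<^sub>m dB)) = (\<Sum>k<m. complex_of_real (p k) * (mtrace (\<rho>A k * As!i) - c))"
  proof -
    have "mtrace (\<rho> * kron A (1\<^sub>m dB)) = (\<Sum>k<m. complex_of_real (p k) * (mtrace (\<rho>A k * A) * mtrace (\<rho>B k * 1\<^sub>m dB)))"
      by (rule sep_trace[OF st rho]) (use HA herm_carrier in auto)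
    also have "\<dots> = (\<Sum>k<m. complex_of_real (p k) * (mtrace (\<rho>A k * As!i) - c))"
    proof (rule sum.cong[OF refl])
      fix k assume "k \<in> {..<m}"
      hence s: "state dA (\<rho>A k)" "state dB (\<rho>B k)" using st by auto
      have "mtrace (\<rho>A k * A) = mtrace (\<rho>A k * As!i) - c * mtrace (\<rho>A k)"
        unfolding A_def by (rule mtrace_sub_scalar[OF state_carrier[OF s(1)] Ac])
      moreover have "mtrace (\<rho>A k) = 1" using s(1) unfolding state_def by simp
      moreover have "mtrace (\<rho>B k * 1\<^sub>m dB) = 1" by (rule state_trace1[OF s(2)])
      ultimately show "complex_of_real (p k) * (mtrace (\<rho>A k * A) * mtrace (\<rho>B k * 1\<^sub>m dB)) = complex_of_real (p k) * (mtrace (\<rho>A k * As!i) - c)"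
        by simp
    qed
    finally show ?thesis .
  qed
  ultimately have "Re (\<Sum>k<m. complex_of_real (p k) * (mtrace (\<rho>A k * As!i) - c)) = 0" by simp
  thus ?thesis unfolding c_def by simp
qed

lemma fnf_B:
  assumes st: "\<forall>k<m. state dA (\<rho>A k) \<and> state dB (\<rho>B k)"
    and rho: "\<rho> = mat (dA*dB) (dA*dB) (\<lambda>ij. \<Sum>k<m. complex_of_real (p k) * kron (\<rho>A k) (\<rho>B k) $$ ij)"
    and fnf: "FNF dA dB \<rho>" and onb: "herm_onb dB Bs" and j: "j < dB^2" and dB: "dB > 0"
  shows "(\<Sum>k<m. p k * (Re (mtrace (\<rho>B k * Bs!j)) - Re (mtrace (1\<^sub>m dB * Bs!j)) / dB)) = 0"
proof -
  have H: "hermitian_mat dB (Bs!j)" using onb j unfolding herm_onb_def by auto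
  have Ac: "Bs!j \<in> carrier_mat dB dB" using H herm_carrier by auto
  define c where "c = complex_of_real (Re (mtrace (1\<^sub>m dB * Bs!j)) / dB)"
  have trA: "mtrace (Bs!j) = complex_of_real (Re (mtrace (1\<^sub>m dB * Bs!j)))"
    using herm_trace_of_real[OF herm_one H] Ac by simp
  define A where "A = Bs!j - c \<cdot>\<^sub>m 1\<^sub>m dB"
  have HA: "hermitian_mat dB A" unfolding A_def c_def by (rule herm_sub_scalar[OF H]) simp
  have tA: "mtrace A = 0" unfolding A_def mtrace_sub_scalar_self[OF Ac] trA c_def using dB by simp
  have "mtrace (\<rho> * kron (1\<^sub>m dA) A) = 0" using fnf HA tA unfolding FNF_def by blast
  moreover have "mtrace (\<rho> * kron (1\<^sub>m dA) A) = (\<Sum>k<m. complex_of_real (p k) * (mtrace (\<rho>B k * Bs!j) - c))"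
  proof -
    have "mtrace (\<rho> * kron (1\<^sub>m dA) A) = (\<Sum>k<m. complex_of_real (p k) * (mtrace (\<rho>A k * 1\<^sub>m dA) * mtrace (\<rho>B k * A)))"
      by (rule sep_trace[OF st rho]) (use HA herm_carrier in auto)
    also have "\<dots> = (\<Sum>k<m. complex_of_real (p k) * (mtrace (\<rho>B k * Bs!j) - c))"
    proof (rule sum.cong[OF refl])
      fix k assume "k \<in> {..<m}"
      hence s: "state dA (\<rho>A k)" "state dB (\<rho>B k)" using st by auto
      have "mtrace (\<rho>B k * A) = mtrace (\<rho>B k * Bs!j) - c * mtrace (\<rho>B k)"
        unfolding A_def by (rule mtrace_sub_scalar[OF state_carrier[OF s(2)] Ac])
      moreover have "mtrace (\<rho>B k) = 1" using s(2) unfolding state_def by simp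
      moreover have "mtrace (\<rho>A k * 1\<^sub>m dA) = 1" by (rule state_trace1[OF s(1)])
      ultimately show "complex_of_real (p k) * (mtrace (\<rho>A k * 1\<^sub>m dA) * mtrace (\<rho>B k * A)) = complex_of_real (p k) * (mtrace (\<rho>B k * Bs!j) - c)"
        by simp
    qed
    finally show ?thesis .
  qed
  ultimately have "Re (\<Sum>k<m. complex_of_real (p k) * (mtrace (\<rho>B k * Bs!j) - c)) = 0" by simp
  thus ?thesis unfolding c_def by simp
qed

lemma corr_decomp:
  assumes st: "\<forall>k<m. state dA (\<rho>A k) \<and> state dB (\<rho>B k)"
    and rho: "\<rho> = mat (dA*dB) (dA*dB) (\<lambda>ij. \<Sum>k<m. complex_of_real (p k) * kron (\<rho>A k) (\<rho>B k) $$ ij)"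
    and onbA: "herm_onb dA As" and onbB: "herm_onb dB Bs" and i: "i < dA^2" and j: "j < dB^2"
  shows "corr_mat \<rho> As Bs $$ (i,j) = (\<Sum>k<m. p k * (Re (mtrace (\<rho>A k * As!i)) * Re (mtrace (\<rho>B k * Bs!j))))"
proof -
  have HA: "hermitian_mat dA (As!i)" using onbA i unfolding herm_onb_def by auto
  have HB: "hermitian_mat dB (Bs!j)" using onbB j unfolding herm_onb_def by auto
  have l: "length As = dA^2" "length Bs = dB^2" using onbA onbB unfolding herm_onb_def by auto
  have "corr_mat \<rho> As Bs $$ (i,j) = Re (mtrace (\<rho> * kron (As!i) (Bs!j)))"
    unfolding corr_mat_def using i j l by simp
  also have "\<dots> = Re (\<Sum>k<m. complex_of_real (p k) * (mtrace (\<rho>A k * As!i) * mtrace (\<rho>B k * Bs!j)))"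
    by (subst sep_trace[OF st rho]) (use HA HB herm_carrier in auto)
  also have "\<dots> = (\<Sum>k<m. p k * (Re (mtrace (\<rho>A k * As!i)) * Re (mtrace (\<rho>B k * Bs!j))))"
  proof -
    have "Im (mtrace (\<rho>A k * As!i)) = 0 \<and> Im (mtrace (\<rho>B k * Bs!j)) = 0" if "k < m" for k
      using st that herm_trace_Im[OF state_herm HA] herm_trace_Im[OF state_herm HB] by auto
    thus ?thesis by simp
  qed
  finally show ?thesis .
qed

lemma sum_bil_lin2:
  fixes u v x0 y0 :: "nat \<Rightarrow> real" and C :: "nat \<Rightarrow> nat \<Rightarrow> real"
  assumes C: "\<And>i j. i \<in> I \<Longrightarrow> j \<in> J \<Longrightarrow> C i j = x0 i * y0 j + (\<Sum>l\<in>L. w l * (x l i * y l j))"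
  shows "(\<Sum>i\<in>I. \<Sum>j\<in>J. u i * C i j * v j) = (\<Sum>i\<in>I. u i * x0 i) * (\<Sum>j\<in>J. v j * y0 j)
     + (\<Sum>l\<in>L. w l * ((\<Sum>i\<in>I. u i * x l i) * (\<Sum>j\<in>J. v j * y l j)))"
proof -
  have "(\<Sum>i\<in>I. \<Sum>j\<in>J. u i * C i j * v j) = (\<Sum>i\<in>I. \<Sum>j\<in>J. (u i * x0 i) * (v j * y0 j) + (\<Sum>l\<in>L. w l * ((u i * x l i) * (v j * y l j))))"
    using C by (intro sum.cong refl) (simp add: algebra_simps sum_distrib_left sum_distrib_right)
  also have "\<dots> = (\<Sum>i\<in>I. \<Sum>j\<in>J. (u i * x0 i) * (v j * y0 j)) + (\<Sum>i\<in>I. \<Sum>j\<in>J. \<Sum>l\<in>L. w l * ((u i * x l i) * (v j * y l j)))"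
    by (simp only: sum.distrib)
  also have "(\<Sum>i\<in>I. \<Sum>j\<in>J. (u i * x0 i) * (v j * y0 j)) = (\<Sum>i\<in>I. u i * x0 i) * (\<Sum>j\<in>J. v j * y0 j)"
    by (simp only: sum_product)
  also have "(\<Sum>i\<in>I. \<Sum>j\<in>J. \<Sum>l\<in>L. w l * ((u i * x l i) * (v j * y l j))) = (\<Sum>i\<in>I. \<Sum>l\<in>L. \<Sum>j\<in>J. w l * ((u i * x l i) * (v j * y l j)))"
    by (rule sum.cong[OF refl], rule sum.swap)
  also have "\<dots> = (\<Sum>l\<in>L. \<Sum>i\<in>I. \<Sum>j\<in>J. w l * ((u i * x l i) * (v j * y l j)))"
    by (rule sum.swap)
  also have "\<dots> = (\<Sum>l\<in>L. w l * ((\<Sum>i\<in>I. u i * x l i) * (\<Sum>j\<in>J. v j * y l j)))"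
    unfolding sum_product by (simp only: sum_distrib_left)
  finally show ?thesis .
qed

lemma vec_E:
  assumes onb: "herm_onb n As" and n: "n \<ge> 1"
  shows "(\<Sum>i<n^2. (Re (mtrace (1\<^sub>m n * As!i)) / n)^2) = 1 / n"
proof -
  have n0: "real n > 0" using n by simp
  have H1: "hermitian_mat n (1\<^sub>m n)" by (rule herm_one)
  have t11: "Re (mtrace (1\<^sub>m n * 1\<^sub>m n)) = n" unfolding mtrace_def by simp
  have "(\<Sum>i<n^2. Re (mtrace (1\<^sub>m n * As!i)) * Re (mtrace (1\<^sub>m n * As!i))) = n"
    using parseval[OF onb H1 H1] t11 by simp
  thus ?thesis using n0 by (simp add: power2_eq_square sum_divide_distrib[symmetric])
qed

lemma vec_facts:
  assumes onb: "herm_onb n As" and S: "state n P" and n: "n \<ge> 1"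
  defines "E \<equiv> (\<lambda>i. Re (mtrace (1\<^sub>m n * As!i)) / n)"
  defines "a \<equiv> (\<lambda>i. Re (mtrace (P * As!i)))"
  shows "(\<Sum>i<n^2. (E i)^2) = 1 / n"
    and "(\<Sum>i<n^2. (a i - E i)^2) \<le> 1 - 1 / n"
    and "(\<Sum>i<n^2. (a i - E i) * E i) = 0"
proof -
  have n0: "real n > 0" using n by simp
  have H1: "hermitian_mat n (1\<^sub>m n)" by (rule herm_one)
  have HP: "hermitian_mat n P" by (rule state_herm[OF S])
  have Pc: "P \<in> carrier_mat n n" by (rule state_carrier[OF S])
  have t11: "Re (mtrace (1\<^sub>m n * 1\<^sub>m n)) = n" unfolding mtrace_def by simp
  have "(\<Sum>i<n^2. Re (mtrace (1\<^sub>m n * As!i)) * Re (mtrace (1\<^sub>m n * As!i))) = n"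
    using parseval[OF onb H1 H1] t11 by simp
  hence EE: "(\<Sum>i<n^2. (E i)^2) = 1 / n"
    unfolding E_def using n0 by (simp add: power2_eq_square sum_divide_distrib[symmetric])
  show "(\<Sum>i<n^2. (E i)^2) = 1 / n" by (rule EE)
  have "(\<Sum>i<n^2. a i * a i) = Re (mtrace (P * P))" unfolding a_def by (rule parseval[OF onb HP HP])
  hence aa: "(\<Sum>i<n^2. (a i)^2) \<le> 1" using purity[OF S] by (simp add: power2_eq_square)
  have tP1: "Re (mtrace (P * 1\<^sub>m n)) = 1" using state_trace1[OF S] by simp
  have "(\<Sum>i<n^2. a i * Re (mtrace (1\<^sub>m n * As!i))) = 1"
    unfolding a_def using parseval[OF onb HP H1] tP1 by simp
  hence aE: "(\<Sum>i<n^2. a i * E i) = 1 / n"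
    unfolding E_def by (simp add: sum_divide_distrib[symmetric])
  have "(\<Sum>i<n^2. (a i - E i)^2) = (\<Sum>i<n^2. (a i)^2) - 2 * (\<Sum>i<n^2. a i * E i) + (\<Sum>i<n^2. (E i)^2)"
    by (simp add: power2_eq_square algebra_simps sum.distrib sum_subtractf sum_distrib_left)
  also have "\<dots> \<le> 1 - 1 / n" using aa aE EE by simp
  finally show "(\<Sum>i<n^2. (a i - E i)^2) \<le> 1 - 1 / n" .
  have "(\<Sum>i<n^2. (a i - E i) * E i) = (\<Sum>i<n^2. a i * E i) - (\<Sum>i<n^2. (E i)^2)"
    by (simp add: power2_eq_square algebra_simps sum_subtractf)
  thus "(\<Sum>i<n^2. (a i - E i) * E i) = 0" using aE EE by simp
qed


lemma sorted_first_max: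
  assumes "sorted_wrt (\<ge>) (\<sigma>::real list)" "l < length \<sigma>"
  shows "\<sigma> ! l \<le> \<sigma> ! 0"
proof (cases "l = 0")
  case False
  thus ?thesis using assms by (simp add: sorted_wrt_iff_nth_less)
qed simp

lemma phys_bounds:
  assumes sep: "separable dA dB \<rho>" and fnf: "FNF dA dB \<rho>"
    and onbA: "herm_onb dA As" and onbB: "herm_onb dB Bs"
    and sv: "singular_values (corr_mat \<rho> As Bs) \<sigma>" and dA: "dA \<ge> 1" and dB: "dB \<ge> 1"
  shows "\<sigma> ! 0 \<ge> 1 / sqrt (real dA * real dB)"
    and "(\<Sum>k<length \<sigma>. \<sigma> ! k) \<le> sqrt (1 / dA) * sqrt (1 / dB) + sqrt (1 - 1 / dA) * sqrt (1 - 1 / dB)"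
proof -
  from sep obtain m p \<rho>A \<rho>B where
    st: "\<forall>k<(m::nat). p k \<ge> 0 \<and> state dA (\<rho>A k) \<and> state dB (\<rho>B k)" and psum: "(\<Sum>k<m. p k) = 1"
    and rho: "\<rho> = mat (dA*dB) (dA*dB) (\<lambda>ij. \<Sum>k<m. complex_of_real (p k) * kron (\<rho>A k) (\<rho>B k) $$ ij)"
    unfolding separable_def by (elim exE conjE) (rule that, assumption+)
  have st': "\<forall>k<m. state dA (\<rho>A k) \<and> state dB (\<rho>B k)" using st by blast
  define NA where "NA = dA^2"
  define NB where "NB = dB^2"
  define C where "C = corr_mat \<rho> As Bs"
  have lA: "length As = NA" and lB: "length Bs = NB" using onbA onbB unfolding herm_onb_def NA_def NB_def by auto
  have Cc: "C \<in> carrier_mat NA NB" unfolding C_def corr_mat_def lA lB by simp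
  define n where "n = length \<sigma>"
  have len: "n = min NA NB" using sv Cc unfolding singular_values_def n_def C_def by auto
  have nA: "n \<le> NA" and nB: "n \<le> NB" using len by auto
  have n1: "n \<ge> 1" using len dA dB unfolding NA_def NB_def by simp
  have sig0: "\<forall>k<n. \<sigma> ! k \<ge> 0" and sorted: "sorted_wrt (\<ge>) \<sigma>" using sv unfolding singular_values_def n_def by auto
  obtain U V where
    ent: "\<And>i j. i < NA \<Longrightarrow> j < NB \<Longrightarrow> C $$ (i,j) = (\<Sum>k<n. U $$ (i,k) * \<sigma> ! k * V $$ (j,k))"
    and oU1: "\<And>k l. k < NA \<Longrightarrow> l < NA \<Longrightarrow> (\<Sum>i<NA. U $$ (i,k) * U $$ (i,l)) = (if k = l then 1 else 0)"
    and oU2: "\<And>i j. i < NA \<Longrightarrow> j < NA \<Longrightarrow> (\<Sum>k<NA. U $$ (i,k) * U $$ (j,k)) = (if i = j then 1 else 0)"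
    and oV1: "\<And>k l. k < NB \<Longrightarrow> l < NB \<Longrightarrow> (\<Sum>i<NB. V $$ (i,k) * V $$ (i,l)) = (if k = l then 1 else 0)"
    and oV2: "\<And>i j. i < NB \<Longrightarrow> j < NB \<Longrightarrow> (\<Sum>k<NB. V $$ (i,k) * V $$ (j,k)) = (if i = j then 1 else 0)"
    by (rule svd_facts[OF sv[folded C_def] Cc, unfolded n_def[symmetric]]) (rule that, assumption+)
  define E where "E = (\<lambda>i. Re (mtrace (1\<^sub>m dA * As!i)) / dA)"
  define F where "F = (\<lambda>j. Re (mtrace (1\<^sub>m dB * Bs!j)) / dB)"
  define a where "a = (\<lambda>k i. Re (mtrace (\<rho>A k * As!i)) - E i)"
  define b where "b = (\<lambda>k j. Re (mtrace (\<rho>B k * Bs!j)) - F j)"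
  have dA0: "dA > 0" and dB0: "dB > 0" using dA dB by auto
  have dA1: "1 / real dA \<le> 1" and dB1: "1 / real dB \<le> 1" using dA dB by auto
  have fA: "(\<Sum>k<m. p k * a k i) = 0" if "i < NA" for i
    unfolding a_def E_def using fnf_A[OF st' rho fnf onbA _ dA0] that NA_def by simp
  have fB: "(\<Sum>k<m. p k * b k j) = 0" if "j < NB" for j
    unfolding b_def F_def using fnf_B[OF st' rho fnf onbB _ dB0] that NB_def by simp
  have F1: "C $$ (i,j) = E i * F j + (\<Sum>k<m. p k * (a k i * b k j))" if ij: "i < NA" "j < NB" for i j
  proof -
    have "C $$ (i,j) = (\<Sum>k<m. p k * ((a k i + E i) * (b k j + F j)))"
      unfolding C_def using corr_decomp[OF st' rho onbA onbB, of i j] ij unfolding NA_def NB_def a_def b_def by simp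
    also have "\<dots> = (\<Sum>k<m. p k * (a k i * b k j) + E i * (p k * b k j) + F j * (p k * a k i) + E i * F j * p k)"
      by (intro sum.cong refl) (simp add: algebra_simps)
    also have "\<dots> = (\<Sum>k<m. p k * (a k i * b k j)) + E i * (\<Sum>k<m. p k * b k j) + F j * (\<Sum>k<m. p k * a k i) + E i * F j * (\<Sum>k<m. p k)"
      by (simp only: sum.distrib sum_distrib_left)
    also have "\<dots> = E i * F j + (\<Sum>k<m. p k * (a k i * b k j))"
      using fA[OF ij(1)] fB[OF ij(2)] psum by simp
    finally show ?thesis .
  qed
  have vA: "(\<Sum>i<NA. (E i)^2) = 1 / dA" unfolding NA_def E_def by (rule vec_E[OF onbA dA])
  have vB: "(\<Sum>j<NB. (F j)^2) = 1 / dB" unfolding NB_def F_def by (rule vec_E[OF onbB dB])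
  have aA: "(\<Sum>i<NA. (a k i)^2) \<le> 1 - 1 / dA" "(\<Sum>i<NA. a k i * E i) = 0" if k: "k < m" for k
  proof -
    have S: "state dA (\<rho>A k)" using st k by auto
    show "(\<Sum>i<NA. (a k i)^2) \<le> 1 - 1 / dA" "(\<Sum>i<NA. a k i * E i) = 0"
      unfolding NA_def a_def E_def using vec_facts(2,3)[OF onbA S dA] by auto
  qed
  have bB: "(\<Sum>j<NB. (b k j)^2) \<le> 1 - 1 / dB" "(\<Sum>j<NB. b k j * F j) = 0" if k: "k < m" for k
  proof -
    have S: "state dB (\<rho>B k)" using st k by auto
    show "(\<Sum>j<NB. (b k j)^2) \<le> 1 - 1 / dB" "(\<Sum>j<NB. b k j * F j) = 0"
      unfolding NB_def b_def F_def using vec_facts(2,3)[OF onbB S dB] by auto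
  qed
  have G1: "\<sigma> ! k = (\<Sum>i<NA. \<Sum>j<NB. U $$ (i,k) * C $$ (i,j) * V $$ (j,k))" if k: "k < n" for k
  proof -
    have "(\<Sum>i<NA. \<Sum>j<NB. U $$ (i,k) * C $$ (i,j) * V $$ (j,k))
        = (\<Sum>i<NA. U $$ (i,k) * 0) * (\<Sum>j<NB. V $$ (j,k) * 0)
          + (\<Sum>l<n. \<sigma> ! l * ((\<Sum>i<NA. U $$ (i,k) * U $$ (i,l)) * (\<Sum>j<NB. V $$ (j,k) * V $$ (j,l))))"
      by (rule sum_bil_lin2) (simp add: ent algebra_simps)
    also have "\<dots> = (\<Sum>l<n. \<sigma> ! l * ((if k = l then 1 else 0) * (if k = l then 1 else 0)))"
    proof -
      have "(\<Sum>l<n. \<sigma> ! l * ((\<Sum>i<NA. U $$ (i,k) * U $$ (i,l)) * (\<Sum>j<NB. V $$ (j,k) * V $$ (j,l))))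
          = (\<Sum>l<n. \<sigma> ! l * ((if k = l then 1 else 0) * (if k = l then 1 else 0)))"
      proof (rule sum.cong[OF refl])
        fix l assume "l \<in> {..<n}"
        hence "l < NA" "l < NB" "k < NA" "k < NB" using k nA nB by auto
        thus "\<sigma> ! l * ((\<Sum>i<NA. U $$ (i,k) * U $$ (i,l)) * (\<Sum>j<NB. V $$ (j,k) * V $$ (j,l)))
          = \<sigma> ! l * ((if k = l then 1 else 0) * (if k = l then 1 else 0))" by (simp add: oU1 oV1)
      qed
      thus ?thesis by simp
    qed
    also have "\<dots> = \<sigma> ! k" using k by (simp add: if_distrib cong: if_cong)
    finally show ?thesis by simp
  qed
  define TT where "TT = (\<lambda>x y. (\<Sum>k<n. (\<Sum>i<NA. U $$ (i,k) * x i) * (\<Sum>j<NB. V $$ (j,k) * y j)))"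
  have TTb: "TT x y \<le> sqrt (\<Sum>i<NA. (x i)^2) * sqrt (\<Sum>j<NB. (y j)^2)" for x y
    unfolding TT_def by (rule T_bound[OF oU2 oV2 nA nB])
  have G2: "(\<Sum>k<n. \<sigma> ! k) = TT E F + (\<Sum>l<m. p l * TT (a l) (b l))"
  proof -
    have "(\<Sum>k<n. \<sigma> ! k) = (\<Sum>k<n. (\<Sum>i<NA. U $$ (i,k) * E i) * (\<Sum>j<NB. V $$ (j,k) * F j)
        + (\<Sum>l<m. p l * ((\<Sum>i<NA. U $$ (i,k) * a l i) * (\<Sum>j<NB. V $$ (j,k) * b l j))))"
    proof (rule sum.cong[OF refl])
      fix k assume "k \<in> {..<n}"
      hence "\<sigma> ! k = (\<Sum>i<NA. \<Sum>j<NB. U $$ (i,k) * C $$ (i,j) * V $$ (j,k))" using G1 by auto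
      also have "\<dots> = (\<Sum>i<NA. U $$ (i,k) * E i) * (\<Sum>j<NB. V $$ (j,k) * F j)
        + (\<Sum>l<m. p l * ((\<Sum>i<NA. U $$ (i,k) * a l i) * (\<Sum>j<NB. V $$ (j,k) * b l j)))"
        by (rule sum_bil_lin2) (simp add: F1)
      finally show "\<sigma> ! k = \<dots>" .
    qed
    also have "\<dots> = TT E F + (\<Sum>k<n. \<Sum>l<m. p l * ((\<Sum>i<NA. U $$ (i,k) * a l i) * (\<Sum>j<NB. V $$ (j,k) * b l j)))"
      unfolding TT_def by (simp only: sum.distrib)
    also have "(\<Sum>k<n. \<Sum>l<m. p l * ((\<Sum>i<NA. U $$ (i,k) * a l i) * (\<Sum>j<NB. V $$ (j,k) * b l j)))
        = (\<Sum>l<m. p l * TT (a l) (b l))"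
      unfolding TT_def by (subst sum.swap) (simp only: sum_distrib_left)
    finally show ?thesis .
  qed
  have "(\<Sum>k<n. \<sigma> ! k) \<le> sqrt (1 / dA) * sqrt (1 / dB) + (\<Sum>l<m. p l * (sqrt (1 - 1 / dA) * sqrt (1 - 1 / dB)))"
    unfolding G2
  proof (intro add_mono sum_mono)
    show "TT E F \<le> sqrt (1 / dA) * sqrt (1 / dB)" using TTb[of E F] vA vB by simp
    fix l assume l: "l \<in> {..<m}"
    have "TT (a l) (b l) \<le> sqrt (1 - 1 / dA) * sqrt (1 - 1 / dB)"
      using aA(1)[of l] bB(1)[of l] l dA1 dB1
      by (intro order.trans[OF TTb] mult_mono real_sqrt_le_mono) (auto intro: sum_nonneg)
    thus "p l * TT (a l) (b l) \<le> p l * (sqrt (1 - 1 / dA) * sqrt (1 - 1 / dB))"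
      using st l by (intro mult_left_mono) auto
  qed
  also have "(\<Sum>l<m. p l * (sqrt (1 - 1 / dA) * sqrt (1 - 1 / dB))) = sqrt (1 - 1 / dA) * sqrt (1 - 1 / dB)"
    using psum by (simp flip: sum_distrib_right)
  finally show "(\<Sum>k<length \<sigma>. \<sigma> ! k) \<le> sqrt (1 / dA) * sqrt (1 / dB) + sqrt (1 - 1 / dA) * sqrt (1 - 1 / dB)"
    unfolding n_def .
  have G3: "(\<Sum>i<NA. \<Sum>j<NB. E i * C $$ (i,j) * F j) = 1 / dA * (1 / dB)"
  proof -
    have "(\<Sum>i<NA. \<Sum>j<NB. E i * C $$ (i,j) * F j) = (\<Sum>i<NA. E i * E i) * (\<Sum>j<NB. F j * F j)
        + (\<Sum>l<m. p l * ((\<Sum>i<NA. E i * a l i) * (\<Sum>j<NB. F j * b l j)))"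
      by (rule sum_bil_lin2) (simp add: F1)
    also have "(\<Sum>l<m. p l * ((\<Sum>i<NA. E i * a l i) * (\<Sum>j<NB. F j * b l j))) = 0"
      using aA(2) bB(2) by (intro sum.neutral) (simp add: mult.commute)
    finally show ?thesis using vA vB by (simp add: power2_eq_square)
  qed
  have G4: "(\<Sum>i<NA. \<Sum>j<NB. E i * C $$ (i,j) * F j) \<le> \<sigma> ! 0 * (sqrt (1 / dA) * sqrt (1 / dB))"
  proof -
    define X where "X = (\<lambda>l. \<Sum>i<NA. U $$ (i,l) * E i)"
    define Y where "Y = (\<lambda>l. \<Sum>j<NB. V $$ (j,l) * F j)"
    have "(\<Sum>i<NA. \<Sum>j<NB. E i * C $$ (i,j) * F j) = (\<Sum>i<NA. E i * 0) * (\<Sum>j<NB. F j * 0)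
        + (\<Sum>l<n. \<sigma> ! l * ((\<Sum>i<NA. E i * U $$ (i,l)) * (\<Sum>j<NB. F j * V $$ (j,l))))"
      by (rule sum_bil_lin2) (simp add: ent algebra_simps)
    also have "\<dots> = (\<Sum>l<n. \<sigma> ! l * (X l * Y l))" unfolding X_def Y_def by (simp add: mult.commute)
    also have "\<dots> \<le> (\<Sum>l<n. \<sigma> ! 0 * (\<bar>X l\<bar> * \<bar>Y l\<bar>))"
    proof (rule sum_mono)
      fix l assume l: "l \<in> {..<n}"
      have s0: "\<sigma> ! l \<ge> 0" using sig0 l by auto
      have sl: "\<sigma> ! l \<le> \<sigma> ! 0" using sorted_first_max[OF sorted] l n_def by auto
      have "\<sigma> ! l * (X l * Y l) \<le> \<sigma> ! l * (\<bar>X l\<bar> * \<bar>Y l\<bar>)"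
        using s0 by (intro mult_left_mono) (auto simp: abs_mult[symmetric])
      also have "\<dots> \<le> \<sigma> ! 0 * (\<bar>X l\<bar> * \<bar>Y l\<bar>)" using sl by (intro mult_right_mono) auto
      finally show "\<sigma> ! l * (X l * Y l) \<le> \<sigma> ! 0 * (\<bar>X l\<bar> * \<bar>Y l\<bar>)" .
    qed
    also have "\<dots> = \<sigma> ! 0 * (\<Sum>l<n. \<bar>X l\<bar> * \<bar>Y l\<bar>)" by (simp add: sum_distrib_left)
    also have "\<dots> \<le> \<sigma> ! 0 * (sqrt (\<Sum>l<n. (X l)^2) * sqrt (\<Sum>l<n. (Y l)^2))"
      using sig0 n1 by (intro mult_left_mono cs_abs) auto
    also have "\<dots> \<le> \<sigma> ! 0 * (sqrt (1 / dA) * sqrt (1 / dB))"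
      using sig0 n1 bessel[OF oU2 nA, of E] bessel[OF oV2 nB, of F] vA vB unfolding X_def Y_def
      by (intro mult_left_mono mult_mono real_sqrt_le_mono) (auto intro: sum_nonneg)
    finally show ?thesis .
  qed
  have "1 / dA * (1 / dB) \<le> \<sigma> ! 0 * (sqrt (1 / dA) * sqrt (1 / dB))" using G3 G4 by simp
  moreover have "sqrt (1 / dA) * sqrt (1 / dB) = 1 / sqrt (real dA * real dB)"
    by (simp add: real_sqrt_divide real_sqrt_mult)
  moreover have "1 / dA * (1 / dB) = (1 / sqrt (real dA * real dB)) * (1 / sqrt (real dA * real dB))"
  proof -
    have X: "real dA * real dB \<ge> 0" by simp
    have "(1 / sqrt (real dA * real dB)) * (1 / sqrt (real dA * real dB)) = 1 / (sqrt (real dA * real dB) * sqrt (real dA * real dB))"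
      by simp
    also have "sqrt (real dA * real dB) * sqrt (real dA * real dB) = real dA * real dB"
      using real_sqrt_mult_self[of "real dA * real dB"] by simp
    finally show ?thesis by simp
  qed
  moreover have "1 / sqrt (real dA * real dB) > 0" using dA0 dB0 by simp
  ultimately have "(1 / sqrt (real dA * real dB)) * (1 / sqrt (real dA * real dB)) \<le> \<sigma> ! 0 * (1 / sqrt (real dA * real dB))"
    "1 / sqrt (real dA * real dB) > 0" by simp_all
  thus "\<sigma> ! 0 \<ge> 1 / sqrt (real dA * real dB)"
    by (rule mult_right_le_imp_le)
qed

lemma beta_facts:
  fixes D d :: real
  assumes d2: "d \<ge> 2" and Dd: "D \<ge> d" and D3: "D \<le> d^3"
  defines "\<beta> \<equiv> sqrt ((D - 1) / (D * (d^2 - 1)) * ((d - 1) / (d * (d^2 - 1))))"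
  shows "(d^2 - 1) * \<beta> = sqrt ((1 - 1 / D) * (1 - 1 / d))"
    and "\<beta> \<le> 1 / sqrt (D * d)"
    and "\<beta> \<ge> 0"
proof -
  have d0: "d > 0" and D0: "D > 0" using d2 Dd by auto
  have q: "d^2 - 1 > 0" using d2 by (smt (verit) one_le_power power2_eq_square mult_le_cancel_left1)
  have X0: "(D - 1) / (D * (d^2 - 1)) * ((d - 1) / (d * (d^2 - 1))) \<ge> 0"
    using d2 Dd q by (intro mult_nonneg_nonneg divide_nonneg_pos) auto
  show "\<beta> \<ge> 0" unfolding \<beta>_def using X0 by (rule real_sqrt_ge_zero)
  have "(d^2 - 1) * \<beta> = sqrt ((d^2 - 1)^2) * \<beta>" using q by simp
  also have "\<dots> = sqrt ((d^2 - 1)^2 * ((D - 1) / (D * (d^2 - 1)) * ((d - 1) / (d * (d^2 - 1)))))"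
    unfolding \<beta>_def by (rule real_sqrt_mult[symmetric])
  also have "(d^2 - 1)^2 * ((D - 1) / (D * (d^2 - 1)) * ((d - 1) / (d * (d^2 - 1)))) = (1 - 1 / D) * (1 - 1 / d)"
  proof -
    have g: "q'^2 * (A / (D * q') * (B / (d * q'))) = (A / D) * (B / d)" if "q' \<noteq> 0" for q' A B :: real
      using that by (simp add: power2_eq_square field_simps)
    have "(D - 1) / D = 1 - 1 / D" "(d - 1) / d = 1 - 1 / d" using d0 D0 by (simp_all add: field_simps)
    thus ?thesis using g[of "d^2 - 1" "D - 1" "d - 1"] q by simp
  qed
  finally show "(d^2 - 1) * \<beta> = sqrt ((1 - 1 / D) * (1 - 1 / d))" .
  have key: "(D - 1) * (d - 1) \<le> (d^2 - 1)^2"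
  proof -
    have "D - 1 \<le> d^3 - 1" using D3 by simp
    also have "\<dots> \<le> (d - 1) * (d + 1)^2" using d2 by (simp add: power2_eq_square power3_eq_cube algebra_simps)
    finally have "(D - 1) * (d - 1) \<le> (d - 1) * (d + 1)^2 * (d - 1)" using d2 by (intro mult_right_mono) auto
    also have "\<dots> = (d^2 - 1)^2" by (simp add: power2_eq_square algebra_simps)
    finally show ?thesis .
  qed
  have "(D - 1) / (D * (d^2 - 1)) * ((d - 1) / (d * (d^2 - 1))) = ((D - 1) * (d - 1)) / ((D * d) * (d^2 - 1)^2)"
    by (simp add: power2_eq_square field_simps)
  also have "\<dots> \<le> (d^2 - 1)^2 / ((D * d) * (d^2 - 1)^2)"
    using key q d0 D0 by (intro divide_right_mono) auto
  also have "\<dots> = 1 / (D * d)" using q by simp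
  finally have "\<beta> \<le> sqrt (1 / (D * d))" unfolding \<beta>_def by (rule real_sqrt_le_mono)
  thus "\<beta> \<le> 1 / sqrt (D * d)" by (simp add: real_sqrt_divide)
qed


theorem theorem1:
  fixes dA dB h :: nat and \<rho> :: "complex mat" and As Bs :: "complex mat list" and \<sigma> :: "real list"
  defines "d \<equiv> min dA dB" and "D \<equiv> max dA dB"
  assumes "D \<le> d^3" and "1 < h" and "h \<le> d^2"
    and "state (dA*dB) \<rho>" and "separable dA dB \<rho>" and "FNF dA dB \<rho>"
    and "herm_onb dA As" and "herm_onb dB Bs"
    and "singular_values (corr_mat \<rho> As Bs) \<sigma>"
  shows "CMN h 1 \<sigma> \<le> esym h (1 / sqrt (real (D*d)) #
           replicate (d^2 - 1) (sqrt ((real D - 1) / (real D * (real d^2 - 1)) *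
                                      ((real d - 1) / (real d * (real d^2 - 1))))))"
proof -
  note D3 = assms(3) and h1 = assms(4) and hd = assms(5) and sep = assms(7) and fnf = assms(8)
    and onbA = assms(9) and onbB = assms(10) and sv = assms(11)
  have d2: "d \<ge> 2"
  proof (rule ccontr)
    assume "\<not> d \<ge> 2"
    hence "d \<le> 1" by simp
    hence "d = 0 \<or> d = 1" by auto
    hence "d^2 \<le> 1" by auto
    thus False using h1 hd by simp
  qed
  have dA2: "dA \<ge> 2" and dB2: "dB \<ge> 2" using d2 unfolding d_def by auto
  have lA: "length As = dA^2" and lB: "length Bs = dB^2" using onbA onbB unfolding herm_onb_def by auto
  have len: "length \<sigma> = d^2"
  proof -
    have "length \<sigma> = min (dA^2) (dB^2)" using sv unfolding singular_values_def corr_mat_def lA lB by simp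
    also have "\<dots> = d^2" unfolding d_def by (cases "dA \<le> dB") (auto simp: power_mono min_def)
    finally show ?thesis .
  qed
  have sig0: "\<forall>k<length \<sigma>. \<sigma> ! k \<ge> 0" using sv unfolding singular_values_def by auto
  define \<alpha> where "\<alpha> = 1 / sqrt (real (D*d))"
  define \<beta> where "\<beta> = sqrt ((real D - 1) / (real D * (real d^2 - 1)) * ((real d - 1) / (real d * (real d^2 - 1))))"
  have Dd: "real (D*d) = real dA * real dB" unfolding D_def d_def by (cases "dA \<le> dB") (auto simp: max_def min_def)
  have al: "\<alpha> = 1 / sqrt (real dA * real dB)" unfolding \<alpha>_def Dd ..
  have rd: "real d \<ge> 2" using d2 by simp
  have rDd: "real D \<ge> real d" unfolding D_def d_def by simp
  have rD3: "real D \<le> (real d)^3" using D3 by (metis of_nat_le_iff of_nat_power)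
  note bf = beta_facts[OF rd rDd rD3, folded \<beta>_def]
  have sym: "(1 - 1 / real dA) * (1 - 1 / real dB) = (1 - 1 / real D) * (1 - 1 / real d)"
    unfolding D_def d_def by (cases "dA \<le> dB") (auto simp: max_def min_def)
  have pb1: "\<sigma> ! 0 \<ge> \<alpha>" unfolding al by (rule phys_bounds(1)[OF sep fnf onbA onbB sv]) (use dA2 dB2 in auto)
  have pb2: "(\<Sum>k<length \<sigma>. \<sigma> ! k) \<le> sqrt (1 / dA) * sqrt (1 / dB) + sqrt (1 - 1 / dA) * sqrt (1 - 1 / dB)"
    by (rule phys_bounds(2)[OF sep fnf onbA onbB sv]) (use dA2 dB2 in auto)
  have e1: "sqrt (1 / real dA) * sqrt (1 / real dB) = \<alpha>" unfolding al by (simp add: real_sqrt_divide real_sqrt_mult)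
  have e2: "sqrt (1 - 1 / real dA) * sqrt (1 - 1 / real dB) = real (length \<sigma> - 1) * \<beta>"
  proof -
    have "real (length \<sigma> - 1) = (real d)^2 - 1" unfolding len using d2 by (simp add: of_nat_diff)
    moreover have "sqrt (1 - 1 / real dA) * sqrt (1 - 1 / real dB) = sqrt ((1 - 1 / real D) * (1 - 1 / real d))"
      by (simp only: real_sqrt_mult[symmetric] sym)
    ultimately show ?thesis using bf(1) by simp
  qed
  have CMN: "CMN h 1 \<sigma> = esym h \<sigma>"
  proof -
    have "(\<Sum>R\<in>{R. R \<subseteq> {..<length \<sigma>} \<and> card R = h}. \<Prod>k\<in>R. (\<sigma> ! k) powr 1)
        = (\<Sum>R\<in>{R. R \<subseteq> {..<length \<sigma>} \<and> card R = h}. \<Prod>k\<in>R. \<sigma> ! k)"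
      using sig0 by (intro sum.cong refl prod.cong) auto
    moreover have "(\<Sum>R\<in>{R. R \<subseteq> {..<length \<sigma>} \<and> card R = h}. \<Prod>k\<in>R. \<sigma> ! k) \<ge> 0"
      using sig0 by (intro sum_nonneg prod_nonneg) auto
    ultimately show ?thesis unfolding CMN_def esym_def by simp
  qed
  have "esym h \<sigma> \<le> esym h (\<alpha> # replicate (length \<sigma> - 1) \<beta>)"
  proof (rule final_ineq)
    have "2*2 \<le> d*d" using d2 by (intro mult_mono) auto
    thus "2 \<le> length \<sigma>" unfolding len by (simp add: power2_eq_square)
    show "1 \<le> h" using h1 by simp
    show "\<forall>i<length \<sigma>. 0 \<le> \<sigma> ! i" by (rule sig0)
    show "\<alpha> \<le> \<sigma> ! 0" by (rule pb1)
    show "\<beta> \<le> \<alpha>" unfolding \<alpha>_def using bf(2) by simp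
    show "0 \<le> \<beta>" by (rule bf(3))
    show "(\<Sum>i<length \<sigma>. \<sigma> ! i) \<le> \<alpha> + real (length \<sigma> - 1) * \<beta>" using pb2 e1 e2 by simp
  qed
  thus ?thesis unfolding CMN len \<alpha>_def \<beta>_def .
qed

end
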